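(* Let $\kappa\in(8/3,8)$, $\alpha\in\mathbb R$ and $\mu$ a probability measure on $\mathbb R$. (i) If $\alpha=0$, then $\nu\mapsto\gamma_\kappa(\alpha,\nu)$ has a unique minimizer $\nu_0$ on $[0,\infty)$. (ii) If $\alpha>0$ and $\mu((0,\infty))>0$, or $\alpha<0$ and $\mu((-\infty,0))>0$, then $\nu\mapsto\gamma_\kappa(\alpha,\nu)$ has a unique minimizer $\nu_0$ on $[0,\infty)$, and $\nu_0>0$. (iii) If $\alpha>0$ and $\mu((0,\infty))=0$, or $\alpha<0$ and $\mu((-\infty,0))=0$, then $\gamma_\kappa(\alpha,\nu)=\infty$ for all $\nu\in[0,\infty)$.
   Context: Let $\Lambda_\mu(\lambda)=\log\int e^{\lambda x}\,d\mu(x)$, $\Lambda_\kappa(\lambda)=\log\big(-\cos(4\pi/\kappa)/\cos(\pi\sqrt{(1-4/\kappa)^2+8\lambda/\kappa})\big)$ for $\lambda<1-\frac2\kappa-\frac{3\kappa}{32}$ (with $\cos(\pi\sqrt{\cdot})=\cosh(\pi\sqrt{-\cdot})$ for negative argument) and $+\infty$ otherwise, and $\Lambda^\star(x)=\sup_\lambda(\lambda x-\Lambda(\lambda))$. Define $\gamma_\kappa(\alpha,\nu)=\nu\Lambda_\mu^\star(\alpha/\nu)+\nu\Lambda_\kappa^\star(1/\nu)$ for $\nu>0$; $\gamma_\kappa(\alpha,0)=\lim_{\nu'\downarrow0}\gamma_\kappa(\alpha,\nu')$ for $\alpha\neq0$; $\gamma_\kappa(0,0)=1-\frac2\kappa-\frac{3\kappa}{32}$.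 *)

theory Defs
  imports "HOL-Probability.Probability"
begin

definition Lambda_mu :: "real measure \<Rightarrow> real \<Rightarrow> ereal" where
  "Lambda_mu \<mu> l =
     (let I = (\<integral>\<^sup>+ x. ennreal (exp (l * x)) \<partial>\<mu>)
      in if I = \<infinity> then \<infinity> else ereal (ln (enn2real I)))"

definition cos_sqrt :: "real \<Rightarrow> real" where
  "cos_sqrt a = (if a \<ge> 0 then cos (pi * sqrt a) else cosh (pi * sqrt (- a)))"

definition Lambda_kappa :: "real \<Rightarrow> real \<Rightarrow> ereal" where
  "Lambda_kappa \<kappa> l =
     (if l < 1 - 2 / \<kappa> - 3 * \<kappa> / 32
      then ereal (ln (- cos (4 * pi / \<kappa>) /
                      cos_sqrt ((1 - 4 / \<kappa>)\<^sup>2 + 8 * l / \<kappa>)))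
      else \<infinity>)"

definition legendre :: "(real \<Rightarrow> ereal) \<Rightarrow> real \<Rightarrow> ereal" where
  "legendre \<Lambda> x = (SUP l. ereal (l * x) - \<Lambda> l)"

definition gamma_pos :: "real \<Rightarrow> real measure \<Rightarrow> real \<Rightarrow> real \<Rightarrow> ereal" where
  "gamma_pos \<kappa> \<mu> \<alpha> \<nu> =
     ereal \<nu> * legendre (Lambda_mu \<mu>) (\<alpha> / \<nu>)
     + ereal \<nu> * legendre (Lambda_kappa \<kappa>) (1 / \<nu>)"

definition gamma_kappa :: "real \<Rightarrow> real measure \<Rightarrow> real \<Rightarrow> real \<Rightarrow> ereal" where
  "gamma_kappa \<kappa> \<mu> \<alpha> \<nu> =
     (if \<nu> > 0 then gamma_pos \<kappa> \<mu> \<alpha> \<nu>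
      else if \<alpha> \<noteq> 0 then Lim (at_right 0) (gamma_pos \<kappa> \<mu> \<alpha>)
      else ereal (1 - 2 / \<kappa> - 3 * \<kappa> / 32))"

end

theory Submission
  imports Defs
begin


lemma cosh_paired: "(\<lambda>n. 1 / (fact (2 * n)) * x ^ (2 * n)) sums cosh (x::real)"
proof -
  have "(\<lambda>n. \<Sum>k = n * 2..<n * 2 + 2. (if even k then x ^ k /\<^sub>R fact k else 0)) sums cosh x"
    by (rule sums_group) (use cosh_converges [of x] in auto)
  then show ?thesis
    by (simp add: ac_simps divide_inverse)
qed

definition cs_coef :: "nat \<Rightarrow> real" where
  "cs_coef n = (-1)^n * pi^(2*n) / fact (2*n)"

lemma cs_sums: "(\<lambda>n. cs_coef n * t^n) sums cos_sqrt t"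
proof (cases "t \<ge> 0")
  case True
  have "(\<lambda>n. (- 1) ^ n / (fact (2 * n)) * (pi * sqrt t) ^ (2 * n)) sums cos (pi * sqrt t)"
    by (rule cos_paired)
  moreover have "(pi * sqrt t) ^ (2 * n) = pi^(2*n) * t^n" for n
    using True by (simp add: power_mult power_mult_distrib)
  ultimately show ?thesis using True
    by (simp add: cos_sqrt_def cs_coef_def mult.assoc)
next
  case False
  have "(\<lambda>n. 1 / (fact (2 * n)) * (pi * sqrt (-t)) ^ (2 * n)) sums cosh (pi * sqrt (-t))"
    by (rule cosh_paired)
  moreover have "1 / (fact (2 * n)) * (pi * sqrt (-t)) ^ (2 * n) = cs_coef n * t^n" for n
    using False by (simp add: power_mult power_mult_distrib cs_coef_def power_minus')
  ultimately show ?thesis using False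
    by (simp add: cos_sqrt_def)
qed

lemma cos_sqrt_eq: "cos_sqrt = (\<lambda>t. \<Sum>n. cs_coef n * t^n)"
  using cs_sums sums_unique by blast

lemma cos_sqrt_deriv: "(cos_sqrt has_real_derivative (\<Sum>n. diffs cs_coef n * t^n)) (at t)"
proof -
  have "\<And>y. summable (\<lambda>n. cs_coef n * y ^ n)" using cs_sums sums_summable by blast
  from termdiffs_strong_converges_everywhere[OF this]
  show ?thesis unfolding cos_sqrt_eq .
qed



definition C0 :: "real \<Rightarrow> real" where "C0 k = - cos (4 * pi / k)"
definition a0 :: "real \<Rightarrow> real" where "a0 k = (1 - 4 / k)\<^sup>2"
definition cc :: "real \<Rightarrow> real" where "cc k = 1 - 2 / k - 3 * k / 32"
definition tt :: "real \<Rightarrow> real \<Rightarrow> real" where "tt k m = a0 k + 8 * m / k"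
definition lk :: "real \<Rightarrow> real \<Rightarrow> real" where "lk k m = ln (C0 k) - ln (cos_sqrt (tt k m))"

lemma cos_sqrt_pos: "t < 1/4 \<Longrightarrow> cos_sqrt t > 0"
proof (cases "t \<ge> 0")
  case True
  assume "t < 1/4"
  have "sqrt t < sqrt (1/4)" using True \<open>t < 1/4\<close> by (simp add: real_sqrt_less_iff)
  moreover have "sqrt (1/4::real) = 1/2" by (simp add: real_sqrt_divide)
  ultimately have "pi * sqrt t < pi/2" by simp
  moreover have "pi * sqrt t \<ge> 0" using True by simp
  ultimately have "0 < cos (pi * sqrt t)" using pi_gt_zero by (intro cos_gt_zero_pi) linarith+
  then show ?thesis using True by (simp add: cos_sqrt_def)
next
  case False then show ?thesis by (simp add: cos_sqrt_def)
qed

lemma cos_sqrt_le1: "t \<ge> 0 \<Longrightarrow> cos_sqrt t \<le> 1"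
  by (simp add: cos_sqrt_def)

lemma cosh_le_exp: "y \<ge> 0 \<Longrightarrow> cosh (y::real) \<le> exp y"
proof -
  assume "y \<ge> 0"
  then have "exp (-y) \<le> exp y" by simp
  then show ?thesis by (simp add: cosh_def)
qed

lemma cos_sqrt_LB:
  assumes "0 < e" "e \<le> 1" "t < 1/4"
  shows "cos_sqrt t \<le> exp (pi\<^sup>2 / (4*e) - e * t)"
proof (cases "t \<ge> 0")
  case True
  have "pi\<^sup>2 / (4*e) \<ge> pi\<^sup>2/4"
    using assms by (simp add: divide_simps)
  moreover have "pi\<^sup>2/4 \<ge> (3::real)^2/4" using pi_gt3
    by (intro divide_right_mono power_mono) auto
  moreover have "e * t \<le> 1/4" using assms True
  proof -
    have "e * t \<le> 1 * t" using assms True by (intro mult_right_mono) auto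
    then show ?thesis using assms by simp
  qed
  ultimately have "pi\<^sup>2 / (4*e) - e * t \<ge> 0" by (simp add: power2_eq_square)
  then have "1 \<le> exp (pi\<^sup>2 / (4*e) - e * t)" by simp
  then show ?thesis using cos_sqrt_le1[OF True] by linarith
next
  case False
  define s where "s = sqrt (-t)"
  have s0: "s \<ge> 0" and s2: "s^2 = -t" using False by (auto simp: s_def)
  have "0 \<le> (e * s - pi / 2)^2 / e" using assms by simp
  also have "\<dots> = e * s^2 - pi * s + pi\<^sup>2 / (4*e)"
    using assms by (simp add: power2_eq_square field_simps)
  finally have key: "pi * s \<le> pi\<^sup>2 / (4*e) - e * t" using s2 by simp
  have "cos_sqrt t = cosh (pi * s)" using False by (simp add: cos_sqrt_def s_def)
  also have "\<dots> \<le> exp (pi * s)" using s0 by (intro cosh_le_exp) simp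
  also have "\<dots> \<le> exp (pi\<^sup>2 / (4*e) - e * t)" using key by simp
  finally show ?thesis .
qed

lemma cos_sqrt_NB:
  assumes "0 \<le> t" "t \<le> 1/4"
  shows "cos_sqrt t \<le> 2 * pi * (1/4 - t)"
proof -
  define s where "s = sqrt t"
  have s0: "0 \<le> s" and s2: "s^2 = t" using assms by (auto simp: s_def)
  have "s \<le> sqrt (1/4)" using assms by (simp add: s_def)
  moreover have "sqrt (1/4::real) = 1/2" by (simp add: real_sqrt_divide)
  ultimately have s1: "s \<le> 1/2" by simp
  have "cos_sqrt t = sin (pi/2 - pi * s)" using assms by (simp add: cos_sqrt_def s_def cos_sin_eq)
  also have "\<dots> \<le> pi/2 - pi * s" using s1 by (intro sin_x_le_x) (simp add: field_simps)
  also have "\<dots> = pi * (1/2 - s)" by (simp add: field_simps)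
  also have "\<dots> \<le> 2 * pi * (1/4 - t)"
  proof -
    have "1/2 - s \<le> 2 * (1/4 - t)"
    proof -
      have "2 * t = (2 * s) * s" using s2 by (simp add: power2_eq_square)
      also have "\<dots> \<le> 1 * s" using s0 s1 by (intro mult_right_mono) auto
      finally show ?thesis by simp
    qed
    then show ?thesis by (simp add: algebra_simps)
  qed
  finally show ?thesis .
qed

context
  fixes \<kappa> :: real
  assumes kl: "8/3 < \<kappa>" and ku: "\<kappa> < 8"
begin

lemma kpos: "\<kappa> > 0" using kl by simp

lemma C0_pos: "C0 \<kappa> > 0"
proof -
  have "4*pi/\<kappa> > pi/2" using kpos ku by (simp add: field_simps)
  moreover have "4*pi/\<kappa> < 3*pi/2" using kpos kl by (simp add: field_simps)
  ultimately have "cos (4*pi/\<kappa> - pi) > 0"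
    by (intro cos_gt_zero_pi) auto
  then show ?thesis by (simp add: C0_def)
qed

lemma C0_le1: "C0 \<kappa> \<le> 1"
  using cos_ge_minus_one[of "4*pi/\<kappa>"] unfolding C0_def by linarith

lemma cc_pos: "cc \<kappa> > 0"
proof -
  have h: "(\<kappa> - 8/3) * (8 - \<kappa>) > 0" using kl ku by simp
  have "3*((\<kappa> - 8/3) * (8 - \<kappa>)) = 32*\<kappa> - 64 - 3*\<kappa>*\<kappa>" by (simp add: field_simps)
  then have p: "32*\<kappa> - 64 - 3*\<kappa>*\<kappa> > 0" using h by linarith
  have "cc \<kappa> = (32*\<kappa> - 64 - 3*\<kappa>*\<kappa>)/(32*\<kappa>)" using kpos by (simp add: cc_def field_simps)
  then show ?thesis using p kpos by simp
qed

lemma tt_cc: "tt \<kappa> (cc \<kappa>) = 1/4"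
  using kpos by (simp add: tt_def a0_def cc_def field_simps power2_eq_square)

lemma tt_less: "m < cc \<kappa> \<Longrightarrow> tt \<kappa> m < 1/4"
proof -
  assume "m < cc \<kappa>"
  then have "8 * m / \<kappa> < 8 * cc \<kappa> / \<kappa>" using kpos by (simp add: divide_strict_right_mono)
  then show ?thesis using tt_cc by (simp add: tt_def)
qed

lemma tt_diff: "1/4 - tt \<kappa> m = 8 * (cc \<kappa> - m) / \<kappa>"
proof -
  have "1/4 - tt \<kappa> m = tt \<kappa> (cc \<kappa>) - tt \<kappa> m" using tt_cc by simp
  also have "\<dots> = 8 * (cc \<kappa> - m) / \<kappa>" by (simp add: tt_def diff_divide_distrib algebra_simps)
  finally show ?thesis .
qed

lemma Lk_eq: "m < cc \<kappa> \<Longrightarrow> Lambda_kappa \<kappa> m = ereal (lk \<kappa> m)"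
proof -
  assume a: "m < cc \<kappa>"
  have p: "cos_sqrt (tt \<kappa> m) > 0" using cos_sqrt_pos[OF tt_less[OF a]] .
  have "- cos (4 * pi / \<kappa>) / cos_sqrt ((1 - 4 / \<kappa>)\<^sup>2 + 8 * m / \<kappa>) = C0 \<kappa> / cos_sqrt (tt \<kappa> m)"
    by (simp add: C0_def tt_def a0_def)
  moreover have "ln (C0 \<kappa> / cos_sqrt (tt \<kappa> m)) = lk \<kappa> m"
    using p C0_pos by (simp add: ln_div lk_def)
  ultimately show ?thesis using a by (simp add: Lambda_kappa_def cc_def)
qed

lemma Lk_inf: "m \<ge> cc \<kappa> \<Longrightarrow> Lambda_kappa \<kappa> m = \<infinity>"
  by (simp add: Lambda_kappa_def cc_def)

lemma lk_LB: "0 < e \<Longrightarrow> e \<le> 1 \<Longrightarrow> m < cc \<kappa> \<Longrightarrow>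
   lk \<kappa> m \<ge> ln (C0 \<kappa>) - pi\<^sup>2 / (4*e) + e * tt \<kappa> m"
proof -
  assume a: "0 < e" "e \<le> 1" "m < cc \<kappa>"
  have "ln (cos_sqrt (tt \<kappa> m)) \<le> pi\<^sup>2 / (4*e) - e * tt \<kappa> m"
    using cos_sqrt_LB[OF a(1,2) tt_less[OF a(3)]] cos_sqrt_pos[OF tt_less[OF a(3)]]
    by (metis ln_exp ln_le_cancel_iff exp_gt_zero)
  then show ?thesis by (simp add: lk_def)
qed

lemma lk_NB: "tt \<kappa> m \<ge> 0 \<Longrightarrow> m < cc \<kappa> \<Longrightarrow>
   lk \<kappa> m \<ge> ln (C0 \<kappa>) - ln (16 * pi * (cc \<kappa> - m) / \<kappa>)"
proof -
  assume a: "tt \<kappa> m \<ge> 0" "m < cc \<kappa>"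
  have p: "cos_sqrt (tt \<kappa> m) > 0" using cos_sqrt_pos[OF tt_less[OF a(2)]] .
  have "cos_sqrt (tt \<kappa> m) \<le> 2 * pi * (1/4 - tt \<kappa> m)"
    using cos_sqrt_NB a tt_less[OF a(2)] by simp
  also have "\<dots> = 16 * pi * (cc \<kappa> - m) / \<kappa>" by (simp add: tt_diff)
  finally have "ln (cos_sqrt (tt \<kappa> m)) \<le> ln (16 * pi * (cc \<kappa> - m) / \<kappa>)"
    using p by simp
  then show ?thesis by (simp add: lk_def)
qed

definition m0 :: real where "m0 = - \<kappa> * (a0 \<kappa> + 1) / 8"

lemma m0_props: "m0 < cc \<kappa>" "lk \<kappa> m0 < 0"
proof -
  have "a0 \<kappa> \<ge> 0" by (simp add: a0_def)
  then have "\<kappa> * (a0 \<kappa> + 1) > 0" using kpos by simp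
  then have "m0 < 0" by (simp add: m0_def)
  then show "m0 < cc \<kappa>" using cc_pos by linarith
  have "tt \<kappa> m0 = -1" using kpos by (simp add: tt_def m0_def field_simps)
  then have "cos_sqrt (tt \<kappa> m0) = cosh pi" by (simp add: cos_sqrt_def)
  moreover have "cosh pi > (1::real)" using cosh_real_strict_mono[of 0 pi]
    by (metis cosh_0 cosh_real_nonneg_less_iff less_eq_real_def pi_gt_zero)
  ultimately have "ln (cos_sqrt (tt \<kappa> m0)) > ln (C0 \<kappa>)"
    using C0_pos C0_le1 by simp
  then show "lk \<kappa> m0 < 0" by (simp add: lk_def)
qed

definition dlk :: "real \<Rightarrow> real" where
  "dlk m = - (8 / \<kappa>) * (\<Sum>n. diffs cs_coef n * (tt \<kappa> m)^n) / cos_sqrt (tt \<kappa> m)"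

lemma lk_deriv: "m < cc \<kappa> \<Longrightarrow> (lk \<kappa> has_real_derivative dlk m) (at m)"
proof -
  assume a: "m < cc \<kappa>"
  have p: "cos_sqrt (tt \<kappa> m) > 0" using cos_sqrt_pos[OF tt_less[OF a]] .
  have t: "(tt \<kappa> has_real_derivative 8 / \<kappa>) (at m)"
    unfolding tt_def using kpos by (auto intro!: derivative_eq_intros)
  have "((\<lambda>m. cos_sqrt (tt \<kappa> m)) has_real_derivative
      (\<Sum>n. diffs cs_coef n * (tt \<kappa> m)^n) * (8 / \<kappa>)) (at m)"
    using DERIV_chain2[OF cos_sqrt_deriv t] by simp
  from DERIV_chain2[OF DERIV_ln[OF p] this] 
  have "((\<lambda>m. ln (cos_sqrt (tt \<kappa> m))) has_real_derivative
      (\<Sum>n. diffs cs_coef n * (tt \<kappa> m)^n) * (8 / \<kappa>) / cos_sqrt (tt \<kappa> m)) (at m)"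
    by (simp add: divide_inverse mult.commute)
  then have "((\<lambda>m. ln (C0 \<kappa>) - ln (cos_sqrt (tt \<kappa> m))) has_real_derivative
      0 - (\<Sum>n. diffs cs_coef n * (tt \<kappa> m)^n) * (8 / \<kappa>) / cos_sqrt (tt \<kappa> m)) (at m)"
    by (intro DERIV_diff) auto
  then show ?thesis unfolding lk_def[abs_def] dlk_def by (simp add: field_simps)
qed

lemma lk_cont: "continuous_on {..<cc \<kappa>} (lk \<kappa>)"
  using lk_deriv by (meson DERIV_isCont continuous_at_imp_continuous_on lessThan_iff)

end


definition saff :: "'i set \<Rightarrow> ('i \<Rightarrow> real) \<Rightarrow> ('i \<Rightarrow> real) \<Rightarrow> real \<Rightarrow> ereal" where
  "saff I a b v = (SUP i\<in>I. ereal (a i - v * b i))"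

lemma saff_upper: "i \<in> I \<Longrightarrow> ereal (a i - v * b i) \<le> saff I a b v"
  unfolding saff_def by (rule SUP_upper)

lemma saff_least: "(\<And>i. i \<in> I \<Longrightarrow> ereal (a i - v * b i) \<le> y) \<Longrightarrow> saff I a b v \<le> y"
  unfolding saff_def by (rule SUP_least)

lemma saff_not_minf: "I \<noteq> {} \<Longrightarrow> saff I a b v \<noteq> -\<infinity>"
proof -
  assume "I \<noteq> {}"
  then obtain i where "i \<in> I" by auto
  from saff_upper[OF this, of a v b] show ?thesis by auto
qed

lemma saff_convex:
  assumes t: "0 \<le> t" "t \<le> 1"
  shows "saff I a b ((1-t)*x + t*y) \<le> ereal (1-t) * saff I a b x + ereal t * saff I a b y"
proof (rule saff_least)
  fix i assume i: "i \<in> I"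
  have "ereal (a i - ((1-t)*x + t*y) * b i) = ereal (1-t) * ereal (a i - x * b i) + ereal t * ereal (a i - y * b i)"
    by (simp add: algebra_simps)
  also have "\<dots> \<le> ereal (1-t) * saff I a b x + ereal t * saff I a b y"
    using t by (intro add_mono ereal_mult_left_mono saff_upper i) auto
  finally show "ereal (a i - ((1-t)*x + t*y) * b i) \<le> ereal (1-t) * saff I a b x + ereal t * saff I a b y" .
qed

lemma saff_lsc:
  assumes "y < saff I a b x" "(f \<longlongrightarrow> x) F"
  shows "eventually (\<lambda>n. y < saff I a b (f n)) F"
proof -
  obtain i where i: "i \<in> I" "y < ereal (a i - x * b i)"
    using assms(1) unfolding saff_def less_SUP_iff by auto
  have "((\<lambda>n. ereal (a i - f n * b i)) \<longlongrightarrow> ereal (a i - x * b i)) F"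
    using assms(2) by (intro tendsto_ereal tendsto_intros)
  from order_tendstoD(1)[OF this i(2)]
  show ?thesis
    by eventually_elim (use saff_upper[OF i(1)] in \<open>blast intro: less_le_trans\<close>)
qed

lemma saff_tendsto0:
  assumes I: "I \<noteq> {}" and v1: "v1 > 0" and fin: "saff I a b v1 \<noteq> \<infinity>"
  shows "(saff I a b \<longlongrightarrow> saff I a b 0) (at_right 0)"
proof (rule order_tendstoI)
  fix y assume "y < saff I a b 0"
  from saff_lsc[OF this, of "\<lambda>v. v" "at_right 0"] show "eventually (\<lambda>v. y < saff I a b v) (at_right 0)"
    by (simp add: tendsto_ident_at)
next
  fix y assume y: "saff I a b 0 < y"
  have nm0: "saff I a b 0 \<noteq> -\<infinity>" "saff I a b v1 \<noteq> -\<infinity>" using saff_not_minf[OF I] by auto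
  obtain h0 where h0: "saff I a b 0 = ereal h0" using y nm0 by (cases "saff I a b 0") auto
  obtain h1 where h1: "saff I a b v1 = ereal h1" using fin nm0 by (cases "saff I a b v1") auto
  have bnd: "saff I a b v \<le> ereal (h0 + (v/v1)*(h1-h0))" if "0 < v" "v < v1" for v
  proof -
    define t where "t = v / v1"
    have t: "0 \<le> t" "t \<le> 1" using that v1 by (auto simp: t_def)
    have "v = (1-t)*0 + t* v1" using v1 by (simp add: t_def)
    then have "saff I a b v = saff I a b ((1-t)*0 + t* v1)" by simp
    also have "\<dots> \<le> ereal (1-t) * saff I a b 0 + ereal t * saff I a b v1"
      by (rule saff_convex[OF t])
    also have "\<dots> = ereal (h0 + t*(h1-h0))" by (simp add: h0 h1 algebra_simps)
    finally show ?thesis by (simp add: t_def)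
  qed
  show "eventually (\<lambda>v. saff I a b v < y) (at_right 0)"
  proof (cases y)
    case PInf
    have "\<forall>v>0. v < v1 \<longrightarrow> saff I a b v < y"
      using bnd PInf by (metis less_PInf_Ex_of_nat leD less_ereal.simps(4) order_le_less_trans ereal_less_PInfty not_less)
    then show ?thesis
      using v1 eventually_at_right_field by blast
  next
    case (real yr)
    have yr: "h0 < yr" using y h0 real by simp
    define bb where "bb = min v1 (v1 * (yr - h0) / (\<bar>h1 - h0\<bar> + 1))"
    have b: "bb > 0" using v1 yr by (simp add: bb_def)
    have "saff I a b v < y" if "0 < v" "v < bb" for v
    proof -
      have vv1: "v < v1" using that by (simp add: bb_def)
      have "v < v1 * (yr - h0) / (\<bar>h1 - h0\<bar> + 1)" using that by (simp add: bb_def)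
      then have "v / v1 * (\<bar>h1 - h0\<bar> + 1) < yr - h0"
        using v1 by (simp add: field_simps)
      moreover have "(v/v1)*(h1-h0) \<le> v / v1 * (\<bar>h1 - h0\<bar> + 1)"
        using that v1 by (intro mult_left_mono) auto
      ultimately have "h0 + (v/v1)*(h1-h0) < yr" by linarith
      then show ?thesis using bnd[OF that(1) vv1] real by (simp add: le_less_trans)
    qed
    then show ?thesis using b eventually_at_right_field by blast
  next
    case MInf then show ?thesis using y by simp
  qed
qed



lemma saff_prod:
  assumes I: "I \<noteq> {}" and J: "J \<noteq> {}"
  shows "saff I a b v + saff J c d v =
    saff (I \<times> J) (\<lambda>p. a (fst p) + c (snd p)) (\<lambda>p. b (fst p) + d (snd p)) v"
proof (rule antisym)
  let ?R = "saff (I \<times> J) (\<lambda>p. a (fst p) + c (snd p)) (\<lambda>p. b (fst p) + d (snd p)) v"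
  have "saff I a b v + saff J c d v = (SUP i\<in>I. ereal (a i - v * b i) + saff J c d v)"
    unfolding saff_def[of I] by (rule SUP_ereal_add_left[symmetric]) (use I saff_not_minf[OF J] in auto)
  also have "\<dots> \<le> ?R"
  proof (rule SUP_least)
    fix i assume i: "i \<in> I"
    have "ereal (a i - v * b i) + saff J c d v = (SUP j\<in>J. ereal (a i - v * b i) + ereal (c j - v * d j))"
      unfolding saff_def by (rule SUP_ereal_add_right[symmetric]) (use J in auto)
    also have "\<dots> \<le> ?R"
    proof (rule SUP_least)
      fix j assume j: "j \<in> J"
      have "ereal (a i - v * b i) + ereal (c j - v * d j) = ereal ((a i + c j) - v * (b i + d j))"
        by (simp add: algebra_simps)
      also have "\<dots> \<le> ?R" using saff_upper[of "(i,j)" "I \<times> J" "\<lambda>p. a (fst p) + c (snd p)" v "\<lambda>p. b (fst p) + d (snd p)"] i j by auto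
      finally show "ereal (a i - v * b i) + ereal (c j - v * d j) \<le> ?R" .
    qed
    finally show "ereal (a i - v * b i) + saff J c d v \<le> ?R" .
  qed
  finally show "saff I a b v + saff J c d v \<le> ?R" .
next
  show "saff (I \<times> J) (\<lambda>p. a (fst p) + c (snd p)) (\<lambda>p. b (fst p) + d (snd p)) v \<le> saff I a b v + saff J c d v"
  proof (rule saff_least)
    fix p assume p: "p \<in> I \<times> J"
    have "ereal (a (fst p) + c (snd p) - v * (b (fst p) + d (snd p)))
       = ereal (a (fst p) - v * b (fst p)) + ereal (c (snd p) - v * d (snd p))"
      by (simp add: algebra_simps)
    also have "\<dots> \<le> saff I a b v + saff J c d v"
      using p by (intro add_mono saff_upper) auto
    finally show "ereal (a (fst p) + c (snd p) - v * (b (fst p) + d (snd p))) \<le> saff I a b v + saff J c d v" .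
  qed
qed

context
  fixes \<kappa> :: real
  assumes kl: "8/3 < \<kappa>" and ku: "\<kappa> < 8"
begin

abbreviation K :: "real \<Rightarrow> ereal" where "K \<equiv> saff {..<cc \<kappa>} (\<lambda>m. m) (lk \<kappa>)"

lemma kpos': "\<kappa> > 0" using kl by simp

lemma K_fin: assumes v: "v \<ge> 0" shows "K v \<noteq> \<infinity>"
proof -
  define e where "e = min 1 (\<kappa> / (8 * v + 1))"
  have e: "0 < e" "e \<le> 1" using v kpos' by (auto simp: e_def)
  have "e \<le> \<kappa> / (8 * v + 1)" by (simp add: e_def)
  then have "e * (8 * v + 1) \<le> \<kappa>" using v by (simp add: field_simps)
  then have "8 * e * v \<le> \<kappa>" using e by (simp add: algebra_simps)
  then have r: "1 - 8 * e * v / \<kappa> \<ge> 0" using kpos' by (simp add: field_simps)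
  define q where "q = ln (C0 \<kappa>) - pi\<^sup>2 / (4*e)"
  have "K v \<le> ereal ((1 - 8 * e * v / \<kappa>) * cc \<kappa> - v * (q + e * a0 \<kappa>))"
  proof (rule saff_least)
    fix m assume "m \<in> {..<cc \<kappa>}"
    then have m: "m < cc \<kappa>" by simp
    have "lk \<kappa> m \<ge> q + e * tt \<kappa> m" using lk_LB[OF kl ku e m] by (simp add: q_def)
    then have "m - v * lk \<kappa> m \<le> m - v * (q + e * tt \<kappa> m)" using v by (simp add: mult_left_mono)
    also have "\<dots> = (1 - 8 * e * v / \<kappa>) * m - v * (q + e * a0 \<kappa>)"
      by (simp add: tt_def algebra_simps)
    also have "\<dots> \<le> (1 - 8 * e * v / \<kappa>) * cc \<kappa> - v * (q + e * a0 \<kappa>)"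
      using r m by (simp add: mult_left_mono)
    finally show "ereal (m - v * lk \<kappa> m) \<le> ereal ((1 - 8 * e * v / \<kappa>) * cc \<kappa> - v * (q + e * a0 \<kappa>))"
      by simp
  qed
  then show ?thesis by auto
qed

lemma K_lower: "ereal (m0 \<kappa> - v * lk \<kappa> (m0 \<kappa>)) \<le> K v"
  using m0_props[OF kl ku] by (intro saff_upper) auto

lemma K_zero: "K 0 = ereal (cc \<kappa>)"
proof (rule antisym)
  show "K 0 \<le> ereal (cc \<kappa>)" by (rule saff_least) auto
  show "ereal (cc \<kappa>) \<le> K 0"
  proof (rule ccontr)
    assume "\<not> ereal (cc \<kappa>) \<le> K 0"
    then have lt: "K 0 < ereal (cc \<kappa>)" by simp
    have "ereal (cc \<kappa> - 1) \<le> K 0" using saff_upper[of "cc \<kappa> - 1" "{..<cc \<kappa>}" "\<lambda>m. m" 0 "lk \<kappa>"] by simp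
    then obtain s where s: "K 0 = ereal s" using lt by (cases "K 0") auto
    have "ereal ((s + cc \<kappa>)/2) \<le> K 0"
      using saff_upper[of "(s + cc \<kappa>)/2" "{..<cc \<kappa>}" "\<lambda>m. m" 0 "lk \<kappa>"] lt s by simp
    then have "(s + cc \<kappa>)/2 \<le> s" using s by simp
    then show False using lt s by simp
  qed
qed

end


context
  fixes \<kappa> :: real
  assumes kl: "8/3 < \<kappa>" and ku: "\<kappa> < 8"
begin

lemma kp: "\<kappa> > 0" using kl by simp

lemma lower_tail:
  assumes v: "v > 0"
  shows "\<exists>Q. \<forall>m. m \<le> 0 \<longrightarrow> m < cc \<kappa> \<longrightarrow> m - v * lk \<kappa> m \<le> m / 2 + Q"
proof -
  define e where "e = min 1 (\<kappa> / (16 * v))"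
  have e: "0 < e" "e \<le> 1" using v kp by (auto simp: e_def)
  have "e \<le> \<kappa> / (16 * v)" by (simp add: e_def)
  then have "e * (16 * v) \<le> \<kappa>" using v by (simp add: field_simps)
  then have r: "8 * e * v / \<kappa> \<le> 1/2" using kp by (simp add: field_simps)
  define q where "q = ln (C0 \<kappa>) - pi\<^sup>2 / (4*e)"
  show ?thesis
  proof (intro exI allI impI)
    fix m assume m: "m \<le> 0" "m < cc \<kappa>"
    have "lk \<kappa> m \<ge> q + e * tt \<kappa> m" using lk_LB[OF kl ku e m(2)] by (simp add: q_def)
    then have "m - v * lk \<kappa> m \<le> m - v * (q + e * tt \<kappa> m)" using v by (simp add: mult_left_mono)
    also have "\<dots> = (1 - 8 * e * v / \<kappa>) * m - v * (q + e * a0 \<kappa>)"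
      by (simp add: tt_def algebra_simps)
    also have "\<dots> \<le> m / 2 - v * (q + e * a0 \<kappa>)"
    proof -
      have "(1/2 - 8 * e * v / \<kappa>) * m \<le> 0" using r m by (intro mult_nonneg_nonpos) auto
      then show ?thesis by (simp add: algebra_simps)
    qed
    finally show "m - v * lk \<kappa> m \<le> m / 2 + (- v * (q + e * a0 \<kappa>))" by simp
  qed
qed

lemma tt_nonneg: "m \<ge> - a0 \<kappa> * \<kappa> / 8 \<Longrightarrow> tt \<kappa> m \<ge> 0"
proof -
  assume "m \<ge> - a0 \<kappa> * \<kappa> / 8"
  then have "8 * m / \<kappa> \<ge> - a0 \<kappa>" using kp by (simp add: field_simps)
  then show ?thesis by (simp add: tt_def)
qed

lemma cc_gt: "- a0 \<kappa> * \<kappa> / 8 < cc \<kappa>"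
proof -
  have "a0 \<kappa> + 8 * cc \<kappa> / \<kappa> > 0" using tt_cc[OF kl ku] by (simp add: tt_def)
  then have "8 * cc \<kappa> / \<kappa> > - a0 \<kappa>" by linarith
  then show ?thesis using kp by (simp add: field_simps)
qed

lemma upper_tail:
  assumes v: "v > 0"
  shows "\<exists>U. U < cc \<kappa> \<and> (\<forall>m. U < m \<longrightarrow> m < cc \<kappa> \<longrightarrow> m - v * lk \<kappa> m < y)"
proof -
  define W where "W = (y - cc \<kappa> + v * ln (C0 \<kappa>)) / v"
  define U where "U = max (- a0 \<kappa> * \<kappa> / 8) (cc \<kappa> - \<kappa> * exp W / (32 * pi))"
  have "U < cc \<kappa>" using cc_gt kp by (simp add: U_def)
  moreover have "m - v * lk \<kappa> m < y" if m: "U < m" "m < cc \<kappa>" for m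
  proof -
    have tt0: "tt \<kappa> m \<ge> 0" using m by (intro tt_nonneg) (simp add: U_def)
    have "cc \<kappa> - m < \<kappa> * exp W / (32 * pi)" using m by (simp add: U_def)
    then have "16 * pi * (cc \<kappa> - m) / \<kappa> < exp W / 2"
      using kp pi_gt_zero by (simp add: field_simps)
    also have "\<dots> < exp W" by simp
    finally have lt: "16 * pi * (cc \<kappa> - m) / \<kappa> < exp W" .
    have pos: "16 * pi * (cc \<kappa> - m) / \<kappa> > 0" using m kp by simp
    have "ln (16 * pi * (cc \<kappa> - m) / \<kappa>) < W"
      using lt pos by (metis ln_exp ln_less_cancel_iff exp_gt_zero)
    then have "v * ln (16 * pi * (cc \<kappa> - m) / \<kappa>) < v * W" using v by simp
    moreover have "lk \<kappa> m \<ge> ln (C0 \<kappa>) - ln (16 * pi * (cc \<kappa> - m) / \<kappa>)"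
      using lk_NB[OF kl ku tt0 m(2)] .
    then have "m - v * lk \<kappa> m \<le> m - v * (ln (C0 \<kappa>) - ln (16 * pi * (cc \<kappa> - m) / \<kappa>))"
      using v by (simp add: mult_left_mono)
    moreover have "v * W = y - cc \<kappa> + v * ln (C0 \<kappa>)" using v by (simp add: W_def)
    ultimately show ?thesis using m(2) by (simp add: algebra_simps)
  qed
  ultimately show ?thesis by blast
qed

lemma K_attain:
  assumes v: "v > 0"
  shows "\<exists>m<cc \<kappa>. \<forall>m'<cc \<kappa>. m' - v * lk \<kappa> m' \<le> m - v * lk \<kappa> m"
proof -
  define phi where "phi m = m - v * lk \<kappa> m" for m
  let ?m0 = "m0 \<kappa>"
  have m0c: "?m0 < cc \<kappa>" using m0_props[OF kl ku] by simp
  obtain Q where Q: "\<And>m. m \<le> 0 \<Longrightarrow> m < cc \<kappa> \<Longrightarrow> phi m \<le> m / 2 + Q"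
    using lower_tail[OF v] unfolding phi_def by blast
  obtain U where U: "U < cc \<kappa>" "\<And>m. U < m \<Longrightarrow> m < cc \<kappa> \<Longrightarrow> phi m < phi ?m0"
    using upper_tail[OF v, of "phi ?m0"] unfolding phi_def by blast
  define L where "L = min 0 (2 * (phi ?m0 - Q) - 1)"
  have Lt: "phi m < phi ?m0" if "m < L" for m
  proof -
    have "m \<le> 0" "m < cc \<kappa>" using that cc_pos[OF kl ku] by (auto simp: L_def)
    from Q[OF this] have "phi m \<le> m/2 + Q" .
    moreover have "m / 2 < phi ?m0 - Q - 1/2" using that by (simp add: L_def)
    ultimately show ?thesis by linarith
  qed
  define S where "S = {min L ?m0 .. max U ?m0}"
  have Ssub: "S \<subseteq> {..<cc \<kappa>}" using U m0c by (auto simp: S_def)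
  have "continuous_on S phi"
    unfolding phi_def
    by (intro continuous_intros continuous_on_subset[OF lk_cont[OF kl ku] Ssub])
  moreover have "compact S" "S \<noteq> {}" by (auto simp: S_def)
  ultimately obtain ms where ms: "ms \<in> S" "\<forall>y\<in>S. phi y \<le> phi ms"
    using continuous_attains_sup by blast
  have m0S: "?m0 \<in> S" by (simp add: S_def)
  show ?thesis
  proof (intro exI conjI allI impI)
    show "ms < cc \<kappa>" using ms Ssub by auto
    fix m' assume m': "m' < cc \<kappa>"
    have "phi m' \<le> phi ms"
    proof (cases "m' \<in> S")
      case True then show ?thesis using ms by auto
    next
      case False
      then have "m' < min L ?m0 \<or> m' > max U ?m0" by (auto simp: S_def)
      then have "phi m' < phi ?m0"
        using Lt U(2) m' by force
      then show ?thesis using ms m0S by force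
    qed
    then show "m' - v * lk \<kappa> m' \<le> ms - v * lk \<kappa> ms" by (simp add: phi_def)
  qed
qed

lemma K_rd:
  assumes v1: "v1 > 0"
  shows "\<exists>v. 0 < v \<and> v \<le> v1 \<and> K \<kappa> v < ereal (cc \<kappa> - B * v)"
proof -
  define E where "E = exp (ln (C0 \<kappa>) - \<bar>B\<bar> - 1)"
  define ms where "ms = max (- a0 \<kappa> * \<kappa> / 8) (cc \<kappa> - \<kappa> * E / (16 * pi))"
  have msc: "ms < cc \<kappa>" using cc_gt kp by (simp add: ms_def E_def)
  have big: "lk \<kappa> m \<ge> \<bar>B\<bar> + 1" if m: "ms \<le> m" "m < cc \<kappa>" for m
  proof -
    have tt0: "tt \<kappa> m \<ge> 0" using m by (intro tt_nonneg) (simp add: ms_def)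
    have "cc \<kappa> - m \<le> \<kappa> * E / (16 * pi)" using m by (simp add: ms_def)
    then have le: "16 * pi * (cc \<kappa> - m) / \<kappa> \<le> E"
      using kp pi_gt_zero by (simp add: field_simps)
    have pos: "16 * pi * (cc \<kappa> - m) / \<kappa> > 0" using m kp by simp
    have "ln (16 * pi * (cc \<kappa> - m) / \<kappa>) \<le> ln (C0 \<kappa>) - \<bar>B\<bar> - 1"
      using le pos unfolding E_def by (metis ln_exp ln_le_cancel_iff exp_gt_zero)
    then show ?thesis using lk_NB[OF kl ku tt0 m(2)] by linarith
  qed
  define q1 where "q1 = ln (C0 \<kappa>) - pi\<^sup>2 / 4"
  define E2 where "E2 = - 8 * ms / \<kappa> - q1 - a0 \<kappa> + B"
  define v where "v = min v1 (min (\<kappa>/8) ((cc \<kappa> - ms) / (2 * (\<bar>E2\<bar> + 1))))"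
  have vpos: "v > 0" using v1 kp msc by (simp add: v_def)
  have vle: "v \<le> v1" "v \<le> \<kappa>/8" "v \<le> (cc \<kappa> - ms) / (2 * (\<bar>E2\<bar> + 1))"
    unfolding v_def
      apply (rule min.cobounded1)
     apply (rule order_trans[OF min.cobounded2 min.cobounded1])
    apply (rule order_trans[OF min.cobounded2 min.cobounded2])
    done
  define d where "d = min v ((cc \<kappa> - ms)/2)"
  have dpos: "d > 0" using vpos msc by (simp add: d_def)
  have "K \<kappa> v \<le> ereal (cc \<kappa> - B * v - d)"
  proof (rule saff_least)
    fix m assume "m \<in> {..<cc \<kappa>}"
    then have m: "m < cc \<kappa>" by simp
    show "ereal (m - v * lk \<kappa> m) \<le> ereal (cc \<kappa> - B * v - d)"
    proof (cases "ms \<le> m")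
      case True
      have "v * (\<bar>B\<bar> + 1) \<le> v * lk \<kappa> m" using big[OF True m] vpos by (simp add: mult_left_mono)
      moreover have "B * v \<le> \<bar>B\<bar> * v" using vpos by (simp add: mult_right_mono)
      moreover have "d \<le> v" by (simp add: d_def)
      ultimately show ?thesis using m by (simp add: algebra_simps)
    next
      case False
      have e1: "(0::real) < 1" "(1::real) \<le> 1" by auto
      have "lk \<kappa> m \<ge> q1 + 1 * tt \<kappa> m" using lk_LB[OF kl ku e1 m] by (simp add: q1_def)
      then have "m - v * lk \<kappa> m \<le> m - v * (q1 + tt \<kappa> m)" using vpos by (simp add: mult_left_mono)
      also have "\<dots> = (1 - 8 * v / \<kappa>) * m - v * (q1 + a0 \<kappa>)"
        by (simp add: tt_def algebra_simps)
      also have "\<dots> \<le> (1 - 8 * v / \<kappa>) * ms - v * (q1 + a0 \<kappa>)"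
      proof -
        have "8 * v \<le> \<kappa>" using vle(2) by linarith
        then have "8 * v / \<kappa> \<le> 1" using kp by (simp add: divide_le_eq)
        then show ?thesis using False by (simp add: mult_left_mono)
      qed
      also have "\<dots> = ms + v * E2 - B * v" by (simp add: E2_def algebra_simps)
      also have "\<dots> \<le> cc \<kappa> - B * v - d"
      proof -
        have "v * (2 * (\<bar>E2\<bar> + 1)) \<le> cc \<kappa> - ms" using vle(3) by (simp add: field_simps)
        moreover have "v * E2 \<le> v * (\<bar>E2\<bar> + 1)" using vpos by (intro mult_left_mono) auto
        moreover have "v * (\<bar>E2\<bar> + 1) \<le> (cc \<kappa> - ms) / 2"
          using \<open>v * (2 * (\<bar>E2\<bar> + 1)) \<le> cc \<kappa> - ms\<close> by (simp add: field_simps)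
        ultimately have h1: "v * E2 \<le> (cc \<kappa> - ms) / 2" by (meson order_trans)
        have h2: "d \<le> (cc \<kappa> - ms)/2" unfolding d_def by (rule min.cobounded2)
        have "ms + v * E2 - B * v \<le> ms + (cc \<kappa> - ms) / 2 - B * v" using h1 by simp
        also have "\<dots> = cc \<kappa> - (cc \<kappa> - ms) / 2 - B * v" by (simp add: field_simps)
        also have "\<dots> \<le> cc \<kappa> - B * v - d" using h2 by simp
        finally show ?thesis .
      qed
      finally show ?thesis by simp
    qed
  qed
  also have "\<dots> < ereal (cc \<kappa> - B * v)" using dpos by simp
  finally show ?thesis using vpos vle by blast
qed

end


context
  fixes \<kappa> :: real
  assumes kl: "8/3 < \<kappa>" and ku: "\<kappa> < 8"
  fixes D :: "real set" and aa bb :: "real \<Rightarrow> real"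
  assumes D0: "0 \<in> D" and aa0: "aa 0 = 0" and bb0: "bb 0 = 0"
begin

abbreviation H :: "real \<Rightarrow> ereal" where "H v \<equiv> saff D aa bb v + K \<kappa> v"

lemma A_nonneg: "0 \<le> saff D aa bb v"
  using saff_upper[OF D0, of aa v bb] aa0 bb0 by (simp add: zero_ereal_def)

lemma H_saff: "H v = saff (D \<times> {..<cc \<kappa>}) (\<lambda>p. aa (fst p) + snd p) (\<lambda>p. bb (fst p) + lk \<kappa> (snd p)) v"
  using saff_prod[of D "{..<cc \<kappa>}" aa bb v "\<lambda>m. m" "lk \<kappa>"] D0 by auto

lemma H_lower: "ereal (m0 \<kappa> - v * lk \<kappa> (m0 \<kappa>)) \<le> H v"
proof -
  have "ereal (m0 \<kappa> - v * lk \<kappa> (m0 \<kappa>)) \<le> K \<kappa> v" by (rule K_lower[OF kl ku])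
  then show ?thesis using A_nonneg[of v] by (metis add_mono add_0)
qed

lemma min_exists:
  assumes vs: "vs \<ge> 0" "H vs \<noteq> \<infinity>"
  shows "\<exists>v0\<ge>0. \<forall>v\<ge>0. H v0 \<le> H v"
proof -
  define dl where "dl = - lk \<kappa> (m0 \<kappa>)"
  have dl: "dl > 0" using m0_props[OF kl ku] by (simp add: dl_def)
  have Hlow: "ereal (m0 \<kappa> + v * dl) \<le> H v" for v
    using H_lower[of v] by (simp add: dl_def)
  obtain hs where hs: "H vs = ereal hs"
    using vs(2) Hlow[of vs] by (cases "H vs") auto
  define R where "R = max vs ((hs - m0 \<kappa>) / dl + 1)"
  have vsR: "vs \<in> {0..R}" using vs by (simp add: R_def)
  have beyond: "H vs < H v" if "v > R" for v
  proof -
    have "v > (hs - m0 \<kappa>) / dl + 1" using that by (simp add: R_def)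
    then have "v * dl > hs - m0 \<kappa> + dl" using dl by (simp add: field_simps)
    then have "hs < m0 \<kappa> + v * dl" using dl by linarith
    then have "ereal hs < ereal (m0 \<kappa> + v * dl)" by simp
    then show ?thesis using Hlow[of v] hs by (metis less_le_trans)
  qed
  define M where "M = (INF v\<in>{0..R}. H v)"
  have "M \<le> H vs" unfolding M_def using vsR by (rule INF_lower)
  moreover have "ereal (m0 \<kappa>) \<le> M"
    unfolding M_def
  proof (rule INF_greatest)
    fix v assume "v \<in> {0..R}"
    then have "m0 \<kappa> \<le> m0 \<kappa> + v * dl" using dl by simp
    then show "ereal (m0 \<kappa>) \<le> H v" using Hlow[of v] by (meson ereal_less_eq(3) order_trans)
  qed
  ultimately obtain Mr where Mr: "M = ereal Mr" using hs by (cases M) auto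
  have "\<forall>n. \<exists>x. x \<in> {0..R} \<and> H x < ereal (Mr + inverse (real (Suc n)))"
  proof
    fix n
    have "M < ereal (Mr + inverse (real (Suc n)))" using Mr by simp
    then show "\<exists>x. x \<in> {0..R} \<and> H x < ereal (Mr + inverse (real (Suc n)))"
      unfolding M_def INF_less_iff by blast
  qed
  then obtain f where f: "\<And>n. f n \<in> {0..R}" "\<And>n. H (f n) < ereal (Mr + inverse (real (Suc n)))"
    by metis
  have "seq_compact {0..R::real}" by (rule compact_imp_seq_compact) simp
  then obtain l r where lr: "l \<in> {0..R}" "strict_mono r" "(f \<circ> r) \<longlonglongrightarrow> l"
    using f(1) unfolding seq_compact_def by blast
  have HlM: "H l \<le> M"
  proof (rule ccontr)
    assume "\<not> H l \<le> M"
    then have "M < H l" by simp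
    then obtain y where y: "M < y" "y < H l" using dense by blast
    have ev1: "eventually (\<lambda>n. y < H ((f \<circ> r) n)) sequentially"
      unfolding H_saff by (rule saff_lsc) (use y(2) lr(3) H_saff in \<open>auto simp: comp_def\<close>)
    have "((\<lambda>n. ereal (Mr + inverse (real (Suc n)))) \<longlonglongrightarrow> ereal (Mr + 0))"
      by (intro tendsto_ereal tendsto_add tendsto_const LIMSEQ_inverse_real_of_nat)
    then have ev2: "eventually (\<lambda>n. ereal (Mr + inverse (real (Suc n))) < y) sequentially"
      using y(1) Mr by (intro order_tendstoD(2)) auto
    have mono: "ereal (Mr + inverse (real (Suc (r n)))) \<le> ereal (Mr + inverse (real (Suc n)))" for n
    proof -
      have "n \<le> r n" using seq_suble[OF lr(2)] by simp
      then show ?thesis by (simp add: field_simps)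
    qed
    from ev1 ev2 have "eventually (\<lambda>n. False) sequentially"
    proof eventually_elim
      case (elim n)
      have "H ((f \<circ> r) n) < ereal (Mr + inverse (real (Suc (r n))))" using f(2) by simp
      also have "\<dots> \<le> ereal (Mr + inverse (real (Suc n)))" by (rule mono)
      also have "\<dots> < y" by (rule elim(2))
      finally show ?case using elim(1) by simp
    qed
    then show False by simp
  qed
  show ?thesis
  proof (intro exI conjI allI impI)
    show "0 \<le> l" using lr by simp
    fix v :: real assume v: "0 \<le> v"
    show "H l \<le> H v"
    proof (cases "v \<le> R")
      case True
      then have "M \<le> H v" unfolding M_def using v by (intro INF_lower) simp
      then show ?thesis using HlM by simp
    next
      case False
      then have "H vs < H v" by (intro beyond) simp
      moreover have "H l \<le> H vs" using HlM \<open>M \<le> H vs\<close> by simp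
      ultimately show ?thesis by simp
    qed
  qed
qed

end


context
  fixes \<kappa> :: real
  assumes kl: "8/3 < \<kappa>" and ku: "\<kappa> < 8"
  fixes D :: "real set" and aa bb :: "real \<Rightarrow> real"
  assumes D0: "0 \<in> D" and aa0: "aa 0 = 0" and bb0: "bb 0 = 0"
begin

lemma no_two_max:
  assumes v: "0 < v1" "v1 < v3" and m: "m3 < cc \<kappa>"
    and max1: "\<And>m. m < cc \<kappa> \<Longrightarrow> m - v1 * lk \<kappa> m \<le> m3 - v1 * lk \<kappa> m3"
    and max3: "\<And>m. m < cc \<kappa> \<Longrightarrow> m - v3 * lk \<kappa> m \<le> m3 - v3 * lk \<kappa> m3"
  shows False
proof -
  have der: "((\<lambda>m. m - v * lk \<kappa> m) has_real_derivative 1 - v * dlk \<kappa> m3) (at m3)" for v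
    by (intro DERIV_diff DERIV_ident DERIV_cmult lk_deriv[OF kl ku m])
  have loc: "\<forall>y. \<bar>m3 - y\<bar> < cc \<kappa> - m3 \<longrightarrow> y - v * lk \<kappa> y \<le> m3 - v * lk \<kappa> m3"
    if "\<And>m. m < cc \<kappa> \<Longrightarrow> m - v * lk \<kappa> m \<le> m3 - v * lk \<kappa> m3" for v
  proof (intro allI impI)
    fix y assume "\<bar>m3 - y\<bar> < cc \<kappa> - m3"
    then have "y < cc \<kappa>" by linarith
    then show "y - v * lk \<kappa> y \<le> m3 - v * lk \<kappa> m3" by (rule that)
  qed
  have d: "0 < cc \<kappa> - m3" using m by simp
  have e1: "1 - v1 * dlk \<kappa> m3 = 0" by (rule DERIV_local_max[OF der d loc]) (rule max1)
  have e3: "1 - v3 * dlk \<kappa> m3 = 0" by (rule DERIV_local_max[OF der d loc]) (rule max3)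
  from e1 e3 have "(v3 - v1) * dlk \<kappa> m3 = 0" by (simp add: algebra_simps)
  then have "dlk \<kappa> m3 = 0" using v by simp
  then show False using e1 by simp
qed

lemma min_unique:
  assumes v1: "v1 \<ge> 0" and v2: "v2 \<ge> 0"
    and min1: "\<forall>v\<ge>0. H \<kappa> D aa bb v1 \<le> H \<kappa> D aa bb v"
    and min2: "\<forall>v\<ge>0. H \<kappa> D aa bb v2 \<le> H \<kappa> D aa bb v"
    and fin: "H \<kappa> D aa bb v1 \<noteq> \<infinity>"
  shows "v1 = v2"
proof (rule ccontr)
  assume ne: "v1 \<noteq> v2"
  have main: False if w: "0 \<le> w1" "w1 < w2"
    and mw1: "\<forall>v\<ge>0. H \<kappa> D aa bb w1 \<le> H \<kappa> D aa bb v"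
    and mw2: "\<forall>v\<ge>0. H \<kappa> D aa bb w2 \<le> H \<kappa> D aa bb v"
    and finw: "H \<kappa> D aa bb w1 \<noteq> \<infinity>" for w1 w2
  proof -
    let ?A = "saff D aa bb" and ?K = "K \<kappa>"
    have eqH: "H \<kappa> D aa bb w1 = H \<kappa> D aa bb w2" using mw1 mw2 w by (meson antisym order_trans less_imp_le)
    have nmA: "?A v \<noteq> -\<infinity>" for v using A_nonneg[of \<kappa> D aa bb v] kl ku D0 aa0 bb0 by auto
    have nmK: "?K v \<noteq> -\<infinity>" for v using K_lower[OF kl ku, of v] by auto
    have finA: "?A v \<noteq> \<infinity>" "?K v \<noteq> \<infinity>" if "H \<kappa> D aa bb v \<noteq> \<infinity>" for v
      using that nmA[of v] nmK[of v] by auto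
    obtain a1 where a1: "?A w1 = ereal a1" using finA(1)[OF finw] nmA[of w1] by (cases "?A w1") auto
    obtain k1 where k1: "?K w1 = ereal k1" using finA(2)[OF finw] nmK[of w1] by (cases "?K w1") auto
    have finw2: "H \<kappa> D aa bb w2 \<noteq> \<infinity>" using finw eqH by simp
    obtain a2 where a2: "?A w2 = ereal a2" using finA(1)[OF finw2] nmA[of w2] by (cases "?A w2") auto
    obtain k2 where k2: "?K w2 = ereal k2" using finA(2)[OF finw2] nmK[of w2] by (cases "?K w2") auto
    define w3 where "w3 = (w1 + w2) / 2"
    have w3: "w3 = (1 - 1/2) * w1 + (1/2) * w2" by (simp add: w3_def)
    have w3pos: "0 < w3" "w1 < w3" using w by (auto simp: w3_def)
    have hA: "?A w3 \<le> ereal ((a1 + a2)/2)"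
      using saff_convex[of "1/2" D aa bb w1 w2] a1 a2 by (simp add: w3_def field_simps)
    have hK: "?K w3 \<le> ereal ((k1 + k2)/2)"
      using saff_convex[of "1/2" "{..<cc \<kappa>}" "\<lambda>m. m" "lk \<kappa>" w1 w2] k1 k2 by (simp add: w3_def field_simps)
    obtain a3 where a3: "?A w3 = ereal a3" using hA nmA[of w3] by (cases "?A w3") auto
    obtain k3 where k3: "?K w3 = ereal k3" using hK nmK[of w3] by (cases "?K w3") auto
    have "H \<kappa> D aa bb w1 \<le> H \<kappa> D aa bb w3" using mw1 w3pos by simp
    then have s: "a1 + k1 \<le> a3 + k3" using a1 k1 a3 k3 by simp
    have s2: "a1 + k1 = a2 + k2" using eqH a1 k1 a2 k2 by simp
    have "a3 \<le> (a1 + a2)/2" "k3 \<le> (k1 + k2)/2" using hA hK a3 k3 by auto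
    then have k3eq: "k3 = (k1 + k2)/2" using s s2 by argo
    obtain m3 where m3: "m3 < cc \<kappa>" "\<And>m'. m' < cc \<kappa> \<Longrightarrow> m' - w3 * lk \<kappa> m' \<le> m3 - w3 * lk \<kappa> m3"
      using K_attain[OF kl ku w3pos(1)] by blast
    have "?K w3 \<le> ereal (m3 - w3 * lk \<kappa> m3)"
      by (rule saff_least) (use m3 in auto)
    moreover have "ereal (m3 - w3 * lk \<kappa> m3) \<le> ?K w3" using m3 by (intro saff_upper) auto
    ultimately have k3m: "k3 = m3 - w3 * lk \<kappa> m3" using k3 by simp
    have f1: "m3 - w1 * lk \<kappa> m3 \<le> k1" using saff_upper[of m3 "{..<cc \<kappa>}" "\<lambda>m. m" w1 "lk \<kappa>"] m3 k1 by simp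
    have f2: "m3 - w2 * lk \<kappa> m3 \<le> k2" using saff_upper[of m3 "{..<cc \<kappa>}" "\<lambda>m. m" w2 "lk \<kappa>"] m3 k2 by simp
    have lin: "m3 - w3 * lk \<kappa> m3 = ((m3 - w1 * lk \<kappa> m3) + (m3 - w2 * lk \<kappa> m3)) / 2"
      by (simp add: w3_def field_simps)
    have eq1: "m3 - w1 * lk \<kappa> m3 = k1" using f1 f2 lin k3m k3eq by argo
    have max1: "m - w1 * lk \<kappa> m \<le> m3 - w1 * lk \<kappa> m3" if "m < cc \<kappa>" for m
      using saff_upper[of m "{..<cc \<kappa>}" "\<lambda>m. m" w1 "lk \<kappa>"] that k1 eq1 by simp
    show False
    proof (cases "w1 = 0")
      case True
      have "(m3 + cc \<kappa>)/2 \<le> m3" using max1[of "(m3 + cc \<kappa>)/2"] m3 True by simp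
      then show False using m3 by simp
    next
      case False
      then have "0 < w1" using w by simp
      from no_two_max[OF this w3pos(2) m3(1) max1 m3(2)] show False .
    qed
  qed
  show False
  proof (cases "v1 < v2")
    case True
    from main[OF v1 True min1 min2 fin] show False .
  next
    case False
    then have "v2 < v1" using ne by simp
    moreover have "H \<kappa> D aa bb v2 \<noteq> \<infinity>"
    proof -
      have "H \<kappa> D aa bb v2 \<le> H \<kappa> D aa bb v1" using min2 v1 by simp
      then show ?thesis using fin by auto
    qed
    ultimately show False using main[OF v2 _ min2 min1] by blast
  qed
qed

end


lemma Lm_not_minf: "Lambda_mu \<mu> l \<noteq> -\<infinity>"
  by (simp add: Lambda_mu_def Let_def)

lemma Lm_0: assumes "prob_space \<mu>" shows "Lambda_mu \<mu> 0 = 0"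
proof -
  interpret prob_space \<mu> by fact
  have "(\<integral>\<^sup>+ x. ennreal (exp (0 * x)) \<partial>\<mu>) = 1" by (simp add: emeasure_space_1)
  then show ?thesis by (simp add: Lambda_mu_def Let_def zero_ereal_def)
qed

lemma Lm_le0:
  assumes "prob_space \<mu>" "AE x in \<mu>. l * x \<le> 0"
  shows "Lambda_mu \<mu> l \<noteq> \<infinity> \<and> real_of_ereal (Lambda_mu \<mu> l) \<le> 0"
proof -
  interpret prob_space \<mu> by fact
  let ?I = "\<integral>\<^sup>+ x. ennreal (exp (l * x)) \<partial>\<mu>"
  have "?I \<le> (\<integral>\<^sup>+ x. 1 \<partial>\<mu>)"
    using assms(2) by (intro nn_integral_mono_AE) (auto elim!: eventually_mono)
  then have le1: "?I \<le> 1" by (simp add: emeasure_space_1)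
  then have fin: "?I \<noteq> \<infinity>" by (auto simp: top_unique)
  have "enn2real ?I \<le> 1" using le1 enn2real_mono[of ?I 1] by simp
  then have "ln (enn2real ?I) \<le> 0"
  proof (cases "enn2real ?I = 0")
    case False
    then have "0 < enn2real ?I" using enn2real_nonneg[of ?I] by linarith
    from ln_le_minus_one[OF this] show ?thesis using \<open>enn2real ?I \<le> 1\<close> by linarith
  qed simp
  then show ?thesis using fin by (simp add: Lambda_mu_def Let_def)
qed

lemma Lm_lower:
  assumes P: "prob_space \<mu>" and S: "sets \<mu> = sets borel"
    and B: "B \<in> sets borel" "B \<subseteq> {a..b}" and pB: "measure \<mu> B > 0"
  shows "\<exists>x\<in>{a..b}. \<exists>C. \<forall>l. Lambda_mu \<mu> l \<noteq> \<infinity> \<longrightarrow> l * x - C \<le> real_of_ereal (Lambda_mu \<mu> l)"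
proof -
  interpret prob_space \<mu> by fact
  have meas: "f \<in> borel_measurable \<mu>" if "f \<in> borel_measurable borel" for f :: "real \<Rightarrow> real"
    using that unfolding measurable_cong_sets[OF S refl] .
  have Bm[measurable]: "B \<in> sets borel" by fact
  have Bmu: "B \<in> sets \<mu>" using B S by simp
  define p where "p = measure \<mu> B"
  have p: "p > 0" using pB by (simp add: p_def)
  define c where "c = max \<bar>a\<bar> \<bar>b\<bar>"
  have bnd: "\<bar>y\<bar> \<le> c" if "y \<in> B" for y
  proof -
    have ab: "a \<le> y" "y \<le> b" using that B(2) by auto
    show ?thesis
    proof (cases "y \<ge> 0")
      case True
      then have "\<bar>y\<bar> \<le> \<bar>b\<bar>" using ab by simp
      then show ?thesis unfolding c_def by (simp add: le_max_iff_disj)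
    next
      case False
      then have "\<bar>y\<bar> \<le> \<bar>a\<bar>" using ab by simp
      then show ?thesis unfolding c_def by (simp add: le_max_iff_disj)
    qed
  qed
  have int1: "integrable \<mu> (\<lambda>y. indicator B y * y)"
  proof (rule integrable_const_bound[where B=c])
    have c0: "0 \<le> c" by (simp add: c_def le_max_iff_disj)
    show "AE y in \<mu>. norm (indicator B y * y) \<le> c"
      by (rule AE_I2) (use bnd c0 in \<open>auto simp: indicator_def\<close>)
  qed (auto intro!: meas)
  have intB: "integrable \<mu> (\<lambda>y. indicator B y * (r::real))" for r
    by (rule integrable_const_bound[where B="\<bar>r\<bar>"]) (auto intro!: meas simp: indicator_def)
  have intBB: "integrable \<mu> (indicator B :: real \<Rightarrow> real)"
    by (rule integrable_const_bound[where B=1]) (auto intro!: meas simp: indicator_def)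
  have Bsp: "B \<inter> space \<mu> = B" using Bmu sets.sets_into_space by blast
  have iB: "(\<integral>y. indicator B y * r \<partial>\<mu>) = r * p" for r
    using Bmu Bsp by (simp add: p_def)
  define x where "x = (\<integral>y. indicator B y * y \<partial>\<mu>) / p"
  have "(\<integral>y. indicator B y * a \<partial>\<mu>) \<le> (\<integral>y. indicator B y * y \<partial>\<mu>)"
    by (rule integral_mono[OF intB int1]) (use B(2) in \<open>auto simp: indicator_def\<close>)
  then have "a * p \<le> (\<integral>y. indicator B y * y \<partial>\<mu>)" by (simp only: iB)
  then have xa: "a \<le> x" using p by (simp add: x_def pos_le_divide_eq)
  have "(\<integral>y. indicator B y * y \<partial>\<mu>) \<le> (\<integral>y. indicator B y * b \<partial>\<mu>)"
    by (rule integral_mono[OF int1 intB]) (use B(2) in \<open>auto simp: indicator_def\<close>)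
  then have "(\<integral>y. indicator B y * y \<partial>\<mu>) \<le> b * p" by (simp only: iB)
  then have xb: "x \<le> b" using p by (simp add: x_def pos_divide_le_eq)
  have intx: "(\<integral>y. indicator B y * y \<partial>\<mu>) = x * p" using p by (simp add: x_def)
  show ?thesis
  proof (intro bexI exI allI impI)
    show "x \<in> {a..b}" using xa xb by simp
    fix l assume fin: "Lambda_mu \<mu> l \<noteq> \<infinity>"
    let ?I = "\<integral>\<^sup>+ y. ennreal (exp (l * y)) \<partial>\<mu>"
    have Ifin: "?I \<noteq> \<infinity>" using fin by (auto simp: Lambda_mu_def Let_def)
    have Lm: "Lambda_mu \<mu> l = ereal (ln (enn2real ?I))" using Ifin by (simp add: Lambda_mu_def Let_def)
    define g where "g y = indicator B y * exp (l * y)" for y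
    have intg: "integrable \<mu> g"
    proof (rule integrable_const_bound[where B="exp (\<bar>l\<bar> * c)"])
      show "AE y in \<mu>. norm (g y) \<le> exp (\<bar>l\<bar> * c)"
      proof (rule AE_I2)
        fix y
        show "norm (g y) \<le> exp (\<bar>l\<bar> * c)"
        proof (cases "y \<in> B")
          case True
          have "l * y \<le> \<bar>l\<bar> * \<bar>y\<bar>" by (metis abs_ge_self abs_mult)
          also have "\<dots> \<le> \<bar>l\<bar> * c" using bnd[OF True] by (simp add: mult_left_mono)
          finally show ?thesis using True by (simp add: g_def)
        qed (simp add: g_def)
      qed
      show "g \<in> borel_measurable \<mu>" unfolding g_def by (intro meas) measurable
    qed
    define h where "h y = exp (l * x) * (indicator B y + l * (indicator B y * y) - l * x * indicator B y)" for y
    have i1: "integral\<^sup>L \<mu> (indicator B) = p" using Bsp by (simp add: p_def)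
    have ia: "integrable \<mu> (\<lambda>y. indicator B y + l * (indicator B y * y))"
      using intBB int1 by auto
    have ib: "integrable \<mu> (\<lambda>y. l * x * indicator B y)"
      using intBB by auto
    have inth0: "integrable \<mu> (\<lambda>y. indicator B y + l * (indicator B y * y) - l * x * indicator B y)"
      using ia ib by auto
    have inth: "integrable \<mu> h" unfolding h_def using inth0 by (intro integrable_mult_right)
    have "integral\<^sup>L \<mu> (\<lambda>y. indicator B y + l * (indicator B y * y) - l * x * indicator B y)
        = integral\<^sup>L \<mu> (\<lambda>y. indicator B y + l * (indicator B y * y)) - integral\<^sup>L \<mu> (\<lambda>y. l * x * indicator B y)"
      using ia ib by (rule Bochner_Integration.integral_diff)
    also have "integral\<^sup>L \<mu> (\<lambda>y. indicator B y + l * (indicator B y * y)) = p + l * (x * p)"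
      using intBB int1 i1 intx by (subst Bochner_Integration.integral_add) auto
    also have "integral\<^sup>L \<mu> (\<lambda>y. l * x * indicator B y) = l * x * p"
      using i1 by simp
    finally have "integral\<^sup>L \<mu> (\<lambda>y. indicator B y + l * (indicator B y * y) - l * x * indicator B y) = p"
      by simp
    then have ih: "integral\<^sup>L \<mu> h = exp (l * x) * p" unfolding h_def by simp
    have hg: "h y \<le> g y" for y
    proof (cases "y \<in> B")
      case True
      have "exp (l * x) * (1 + l * (y - x)) \<le> exp (l * x) * exp (l * (y - x))"
        by (intro mult_left_mono exp_ge_add_one_self) simp
      also have "\<dots> = exp (l * y)" by (simp add: mult_exp_exp algebra_simps)
      finally show ?thesis using True by (simp add: h_def g_def algebra_simps)
    qed (simp add: h_def g_def)
    have "exp (l * x) * p \<le> integral\<^sup>L \<mu> g"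
      using integral_mono[OF inth intg hg] ih by simp
    moreover have "(\<integral>\<^sup>+ y. ennreal (g y) \<partial>\<mu>) = ennreal (integral\<^sup>L \<mu> g)"
      by (rule nn_integral_eq_integral[OF intg]) (simp add: g_def)
    moreover have "(\<integral>\<^sup>+ y. ennreal (g y) \<partial>\<mu>) \<le> ?I"
      by (intro nn_integral_mono) (auto simp: g_def indicator_def)
    ultimately have "ennreal (exp (l * x) * p) \<le> ?I"
      by (metis ennreal_leI order_trans)
    then have "enn2real (ennreal (exp (l * x) * p)) \<le> enn2real ?I"
      using Ifin by (intro enn2real_mono) (auto simp: top.not_eq_extremum)
    then have le: "exp (l * x) * p \<le> enn2real ?I" using p by simp
    have ep: "0 < exp (l * x) * p" using p by simp
    have "ln (exp (l * x) * p) \<le> ln (enn2real ?I)"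
      using le ep by (subst ln_le_cancel_iff) auto
    then have "l * x + ln p \<le> ln (enn2real ?I)" using p by (simp add: ln_mult)
    then show "l * x - (- ln p) \<le> real_of_ereal (Lambda_mu \<mu> l)" using Lm by simp
  qed
qed



lemma saff_cong:
  assumes "I = J" "\<And>i. i \<in> I \<Longrightarrow> a i = a' i" "\<And>i. i \<in> I \<Longrightarrow> b i = b' i"
  shows "saff I a b v = saff J a' b' v"
  unfolding saff_def using assms by (intro SUP_cong) auto

lemma scaled_legendre:
  fixes \<Lambda> :: "real \<Rightarrow> ereal"
  assumes nm: "\<And>l. \<Lambda> l \<noteq> -\<infinity>" and v: "v > 0"
  shows "ereal v * legendre \<Lambda> (y / v) = saff {l. \<Lambda> l \<noteq> \<infinity>} (\<lambda>l. l * y) (\<lambda>l. real_of_ereal (\<Lambda> l)) v"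
    (is "?L = ?R")
proof (rule antisym)
  have "legendre \<Lambda> (y / v) \<le> ereal (1/v) * ?R"
    unfolding legendre_def
  proof (rule SUP_least)
    fix l
    show "ereal (l * (y / v)) - \<Lambda> l \<le> ereal (1/v) * ?R"
    proof (cases "\<Lambda> l")
      case (real r)
      have "ereal (l * (y / v)) - \<Lambda> l = ereal (l * (y / v) - r)" using real by simp
      also have "l * (y / v) - r = (1/v) * (l * y - v * r)" using v by (simp add: field_simps)
      also have "ereal ((1/v) * (l * y - v * r)) = ereal (1/v) * ereal (l * y - v * r)" by simp
      also have "\<dots> \<le> ereal (1/v) * ?R"
      proof (rule ereal_mult_left_mono)
        show "ereal (l * y - v * r) \<le> ?R"
          using saff_upper[of l "{l. \<Lambda> l \<noteq> \<infinity>}" "\<lambda>l. l * y" v "\<lambda>l. real_of_ereal (\<Lambda> l)"] real by simp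
      qed (use v in simp)
      finally show ?thesis .
    qed (use nm in auto)
  qed
  then have "?L \<le> ereal v * (ereal (1/v) * ?R)"
    using v by (intro ereal_mult_left_mono) auto
  also have "\<dots> = ?R" using v by (simp add: mult.assoc[symmetric])
  finally show "?L \<le> ?R" .
next
  show "?R \<le> ?L"
  proof (rule saff_least)
    fix l assume "l \<in> {l. \<Lambda> l \<noteq> \<infinity>}"
    then obtain r where r: "\<Lambda> l = ereal r" using nm[of l] by (cases "\<Lambda> l") auto
    have e1: "l * y - v * r = v * (l * (y / v) - r)" using v by (simp add: field_simps)
    have "ereal (l * y - v * real_of_ereal (\<Lambda> l)) = ereal (v * (l * (y / v) - r))" using r e1 by simp
    also have "\<dots> = ereal v * (ereal (l * (y / v)) - \<Lambda> l)" using r by simp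
    also have "\<dots> \<le> ?L"
      unfolding legendre_def using v by (intro ereal_mult_left_mono SUP_upper) auto
    finally show "ereal (l * y - v * real_of_ereal (\<Lambda> l)) \<le> ?L" .
  qed
qed

lemma pos_measure_piece:
  fixes A :: "nat \<Rightarrow> real set"
  assumes P: "prob_space \<mu>" and S: "sets \<mu> = sets borel"
    and A: "\<And>n. A n \<in> sets borel" and sub: "T \<subseteq> (\<Union>n. A n)" and T: "T \<in> sets borel"
    and pos: "measure \<mu> T > 0"
  shows "\<exists>n. measure \<mu> (A n) > 0"
proof (rule ccontr)
  interpret prob_space \<mu> by fact
  assume "\<not> (\<exists>n. measure \<mu> (A n) > 0)"
  then have m0: "measure \<mu> (A n) = 0" for n
  proof -
    assume h: "\<not> (\<exists>n. measure \<mu> (A n) > 0)"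
    then have "\<not> measure \<mu> (A n) > 0" by blast
    then show ?thesis using measure_nonneg[of \<mu> "A n"] by linarith
  qed
  have nA: "A n \<in> null_sets \<mu>" for n
  proof -
    have "emeasure \<mu> (A n) = 0" using emeasure_eq_measure[of "A n"] m0[of n] by simp
    moreover have "A n \<in> sets \<mu>" using A S by simp
    ultimately show ?thesis by (simp add: null_sets_def)
  qed
  have "(\<Union>n. A n) \<in> null_sets \<mu>" by (rule null_sets_UN[OF nA])
  moreover have "T \<in> sets \<mu>" using T S by simp
  ultimately have "T \<in> null_sets \<mu>" using sub by (rule null_sets_subset)
  then have "emeasure \<mu> T = 0" by (simp add: null_sets_def)
  then have "measure \<mu> T = 0" by (simp add: measure_def)
  then show False using pos by simp
qed

lemma exists_B_pos:
  assumes P: "prob_space \<mu>" and S: "sets \<mu> = sets borel" and pos: "measure \<mu> {0<..} > 0"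
  shows "\<exists>n::nat. measure \<mu> {1 / real (Suc n) .. real (Suc n)} > 0"
proof (rule pos_measure_piece[OF P S _ _ _ pos])
  show "{0<..} \<subseteq> (\<Union>n. {1 / real (Suc n) .. real (Suc n)})"
  proof
    fix y :: real assume "y \<in> {0<..}"
    then have y: "y > 0" by simp
    obtain n :: nat where n: "max y (1/y) < real n" using reals_Archimedean2 by blast
    have "y \<le> real (Suc n)" using n by simp
    moreover have "1 / real (Suc n) \<le> y"
    proof -
      have "1/y < real (Suc n)" using n by simp
      then show ?thesis using y by (simp add: field_simps)
    qed
    ultimately show "y \<in> (\<Union>n. {1 / real (Suc n) .. real (Suc n)})" by auto
  qed
qed auto

lemma exists_B_neg:
  assumes P: "prob_space \<mu>" and S: "sets \<mu> = sets borel" and pos: "measure \<mu> {..<0} > 0"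
  shows "\<exists>n::nat. measure \<mu> {- real (Suc n) .. - 1 / real (Suc n)} > 0"
proof (rule pos_measure_piece[OF P S _ _ _ pos])
  show "{..<0} \<subseteq> (\<Union>n. {- real (Suc n) .. - 1 / real (Suc n)})"
  proof
    fix y :: real assume "y \<in> {..<0}"
    then have y: "-y > 0" by simp
    obtain n :: nat where n: "max (-y) (1/(-y)) < real n" using reals_Archimedean2 by blast
    have "- real (Suc n) \<le> y" using n by simp
    moreover have "y \<le> - 1 / real (Suc n)"
    proof -
      have "1/(-y) < real (Suc n)" using n by simp
      then have "1 / real (Suc n) \<le> -y" using y by (simp add: field_simps)
      then show ?thesis by simp
    qed
    ultimately show "y \<in> (\<Union>n. {- real (Suc n) .. - 1 / real (Suc n)})" by auto
  qed
qed auto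



context
  fixes \<kappa> \<alpha> :: real and \<mu> :: "real measure"
  assumes kl: "8/3 < \<kappa>" and ku: "\<kappa> < 8"
    and P: "prob_space \<mu>" and S: "sets \<mu> = sets borel"
begin

abbreviation DD where "DD \<equiv> {l. Lambda_mu \<mu> l \<noteq> \<infinity>}"
abbreviation aA where "aA \<equiv> (\<lambda>l. l * \<alpha>)"
abbreviation bA where "bA \<equiv> (\<lambda>l. real_of_ereal (Lambda_mu \<mu> l))"
abbreviation HH where "HH v \<equiv> H \<kappa> DD aA bA v"

lemma DD0: "0 \<in> DD" and aA0: "aA 0 = 0" and bA0: "bA 0 = 0"
  using Lm_0[OF P] by auto

lemma Lk_not_minf: "Lambda_kappa \<kappa> l \<noteq> -\<infinity>"
  by (cases "l < cc \<kappa>") (auto simp: Lk_eq[OF kl ku] Lk_inf[OF kl ku])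

lemma gp_eq: assumes v: "v > 0" shows "gamma_pos \<kappa> \<mu> \<alpha> v = HH v"
proof -
  have "ereal v * legendre (Lambda_mu \<mu>) (\<alpha> / v) = saff DD aA bA v"
    by (rule scaled_legendre[OF Lm_not_minf v])
  moreover have "ereal v * legendre (Lambda_kappa \<kappa>) (1 / v) =
      saff {l. Lambda_kappa \<kappa> l \<noteq> \<infinity>} (\<lambda>l. l * 1) (\<lambda>l. real_of_ereal (Lambda_kappa \<kappa> l)) v"
    by (rule scaled_legendre[OF Lk_not_minf v])
  moreover have "saff {l. Lambda_kappa \<kappa> l \<noteq> \<infinity>} (\<lambda>l. l * 1) (\<lambda>l. real_of_ereal (Lambda_kappa \<kappa> l)) v
      = K \<kappa> v"
  proof (rule saff_cong)
    have iff: "Lambda_kappa \<kappa> l \<noteq> \<infinity> \<longleftrightarrow> l < cc \<kappa>" for l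
    proof
      assume "Lambda_kappa \<kappa> l \<noteq> \<infinity>"
      then show "l < cc \<kappa>" using Lk_inf[OF kl ku, of l] by force
    qed (simp add: Lk_eq[OF kl ku])
    show "{l. Lambda_kappa \<kappa> l \<noteq> \<infinity>} = {..<cc \<kappa>}" using iff by blast
    fix i assume "i \<in> {l. Lambda_kappa \<kappa> l \<noteq> \<infinity>}"
    then have "i < cc \<kappa>" using iff by blast
    then show "real_of_ereal (Lambda_kappa \<kappa> i) = lk \<kappa> i" by (simp add: Lk_eq[OF kl ku])
  qed simp
  ultimately show ?thesis by (simp add: gamma_pos_def)
qed

lemma g_eq_pos: "v > 0 \<Longrightarrow> gamma_kappa \<kappa> \<mu> \<alpha> v = HH v"
  using gp_eq by (simp add: gamma_kappa_def)

lemma A_nn: "0 \<le> saff DD aA bA v"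
  using A_nonneg[of \<kappa> DD aA bA v] kl ku DD0 aA0 bA0 by blast

lemma K_nm: "K \<kappa> v \<noteq> -\<infinity>"
  using K_lower[OF kl ku, of v] by auto

lemma A_nm: "saff DD aA bA v \<noteq> -\<infinity>" using A_nn[of v] by auto

lemma H0_alpha0: "\<alpha> = 0 \<Longrightarrow> HH 0 = ereal (cc \<kappa>)"
proof -
  assume a: "\<alpha> = 0"
  have "saff DD aA bA 0 \<le> 0" by (rule saff_least) (simp add: a zero_ereal_def)
  then have "saff DD aA bA 0 = 0" using A_nn[of 0] by simp
  then show ?thesis using K_zero[OF kl ku] by simp
qed

lemma g0_alpha0: "\<alpha> = 0 \<Longrightarrow> gamma_kappa \<kappa> \<mu> \<alpha> 0 = HH 0"
  using H0_alpha0 by (simp add: gamma_kappa_def cc_def)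

lemma g_eq_H_alpha0: "\<alpha> = 0 \<Longrightarrow> v \<ge> 0 \<Longrightarrow> gamma_kappa \<kappa> \<mu> \<alpha> v = HH v"
  using g0_alpha0 g_eq_pos by (cases "v = 0") auto


lemma case2_fin:
  assumes c2: "((\<alpha> > 0 \<and> measure \<mu> {0<..} > 0) \<or> (\<alpha> < 0 \<and> measure \<mu> {..<0} > 0))"
  shows "\<exists>v1>0. HH v1 \<noteq> \<infinity>"
proof -
  obtain x C where x: "x \<noteq> 0" "\<alpha> / x > 0"
    and C: "\<And>l. Lambda_mu \<mu> l \<noteq> \<infinity> \<Longrightarrow> l * x - C \<le> real_of_ereal (Lambda_mu \<mu> l)"
  proof (cases "\<alpha> > 0")
    case True
    then have "measure \<mu> {0<..} > 0" using c2 by auto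
    then obtain n where n: "measure \<mu> {1 / real (Suc n) .. real (Suc n)} > 0"
      using exists_B_pos[OF P S] by blast
    have Bb: "{1 / real (Suc n) .. real (Suc n)} \<in> sets borel" by (rule borel_closed) (rule closed_atLeastAtMost)
    from Lm_lower[OF P S Bb order_refl n] obtain x C where
      xC: "x \<in> {1 / real (Suc n) .. real (Suc n)}"
        "\<forall>l. Lambda_mu \<mu> l \<noteq> \<infinity> \<longrightarrow> l * x - C \<le> real_of_ereal (Lambda_mu \<mu> l)"
      by blast
    have "1 / real (Suc n) \<le> x" using xC(1) by simp
    moreover have "0 < 1 / real (Suc n)" by simp
    ultimately have xp: "x > 0" by linarith
    show ?thesis
    proof (rule that[of x C])
      show "x \<noteq> 0" using xp by simp
      show "\<alpha> / x > 0" using xp True by simp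
    qed (use xC(2) in blast)
  next
    case False
    then have a: "\<alpha> < 0" "measure \<mu> {..<0} > 0" using c2 by auto
    then obtain n where n: "measure \<mu> {- real (Suc n) .. - 1 / real (Suc n)} > 0"
      using exists_B_neg[OF P S] by blast
    have Bb: "{- real (Suc n) .. - 1 / real (Suc n)} \<in> sets borel" by (rule borel_closed) (rule closed_atLeastAtMost)
    from Lm_lower[OF P S Bb order_refl n] obtain x C where
      xC: "x \<in> {- real (Suc n) .. - 1 / real (Suc n)}"
        "\<forall>l. Lambda_mu \<mu> l \<noteq> \<infinity> \<longrightarrow> l * x - C \<le> real_of_ereal (Lambda_mu \<mu> l)"
      by blast
    have "x \<le> - 1 / real (Suc n)" using xC(1) by simp
    moreover have "0 < 1 / real (Suc n)" by simp
    ultimately have xn: "x < 0" by linarith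
    show ?thesis
    proof (rule that[of x C])
      show "x \<noteq> 0" using xn by simp
      show "\<alpha> / x > 0" using xn a(1) by (simp add: divide_neg_neg)
    qed (use xC(2) in blast)
  qed
  define v1 where "v1 = \<alpha> / x"
  have v1: "v1 > 0" using x by (simp add: v1_def)
  have v1x: "v1 * x = \<alpha>" using x by (simp add: v1_def)
  have "saff DD aA bA v1 \<le> ereal (v1 * C)"
  proof (rule saff_least)
    fix l assume l: "l \<in> DD"
    have "l * x - C \<le> bA l" using C[of l] l by simp
    then have h: "v1 * (l * x - C) \<le> v1 * bA l" using v1 by (intro mult_left_mono) auto
    have e: "v1 * (l * x - C) = l * (v1 * x) - v1 * C" by (simp add: algebra_simps)
    have "l * \<alpha> - v1 * bA l \<le> v1 * C" using h e v1x by simp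
    then show "ereal (aA l - v1 * bA l) \<le> ereal (v1 * C)" by simp
  qed
  then have "saff DD aA bA v1 < \<infinity>" by (rule order.strict_trans1) simp
  then have "saff DD aA bA v1 \<noteq> \<infinity>" by simp
  moreover have "K \<kappa> v1 \<noteq> \<infinity>" using K_fin[OF kl ku] v1 by simp
  ultimately have "HH v1 \<noteq> \<infinity>"
  proof -
    assume f1: "saff DD aA bA v1 \<noteq> \<infinity>" and f2: "K \<kappa> v1 \<noteq> \<infinity>"
    obtain a where a: "saff DD aA bA v1 = ereal a" using f1 A_nm[of v1] by (cases "saff DD aA bA v1") auto
    obtain k where k: "K \<kappa> v1 = ereal k" using f2 K_nm[of v1] by (cases "K \<kappa> v1") auto
    show ?thesis unfolding a k by simp
  qed
  then show ?thesis using v1 by blast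
qed

lemma case2_ne: "((\<alpha> > 0 \<and> measure \<mu> {0<..} > 0) \<or> (\<alpha> < 0 \<and> measure \<mu> {..<0} > 0)) \<Longrightarrow> \<alpha> \<noteq> 0" by auto

lemma g0_case2: assumes c2: "((\<alpha> > 0 \<and> measure \<mu> {0<..} > 0) \<or> (\<alpha> < 0 \<and> measure \<mu> {..<0} > 0))" shows "gamma_kappa \<kappa> \<mu> \<alpha> 0 = HH 0"
proof -
  obtain v1 where v1: "v1 > 0" "HH v1 \<noteq> \<infinity>" using case2_fin[OF c2] by blast
  let ?I = "DD \<times> {..<cc \<kappa>}" and ?a = "\<lambda>p. aA (fst p) + snd p" and ?b = "\<lambda>p. bA (fst p) + lk \<kappa> (snd p)"
  have Hs: "HH v = saff ?I ?a ?b v" for v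
    by (rule H_saff[of \<kappa> DD aA bA v, OF kl ku DD0 aA0 bA0])
  have ne: "?I \<noteq> {}" using DD0 by auto
  have "(saff ?I ?a ?b \<longlongrightarrow> saff ?I ?a ?b 0) (at_right 0)"
    by (rule saff_tendsto0[OF ne v1(1)]) (use v1(2) Hs in simp)
  then have t: "(HH \<longlongrightarrow> HH 0) (at_right 0)" unfolding Hs .
  have "eventually (\<lambda>v. HH v = gamma_pos \<kappa> \<mu> \<alpha> v) (at_right 0)"
    unfolding eventually_at_right_field using gp_eq by (intro exI[of _ 1]) auto
  from tendsto_cong[OF this] t have "(gamma_pos \<kappa> \<mu> \<alpha> \<longlongrightarrow> HH 0) (at_right 0)" by simp
  then have "Lim (at_right 0) (gamma_pos \<kappa> \<mu> \<alpha>) = HH 0" by (intro tendsto_Lim) simp_all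
  then show ?thesis using case2_ne[OF c2] by (simp add: gamma_kappa_def)
qed

lemma g_eq_H_case2: "((\<alpha> > 0 \<and> measure \<mu> {0<..} > 0) \<or> (\<alpha> < 0 \<and> measure \<mu> {..<0} > 0)) \<Longrightarrow> v \<ge> 0 \<Longrightarrow> gamma_kappa \<kappa> \<mu> \<alpha> v = HH v"
  using g0_case2 g_eq_pos by (cases "v = 0") auto

lemma uniq_min:
  assumes g: "\<And>v. v \<ge> 0 \<Longrightarrow> gamma_kappa \<kappa> \<mu> \<alpha> v = HH v"
    and vs: "vs \<ge> 0" "HH vs \<noteq> \<infinity>"
  shows "\<exists>!v0. v0 \<ge> 0 \<and> (\<forall>v\<ge>0. gamma_kappa \<kappa> \<mu> \<alpha> v0 \<le> gamma_kappa \<kappa> \<mu> \<alpha> v)"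
proof -
  have eqv: "(v0 \<ge> 0 \<and> (\<forall>v\<ge>0. gamma_kappa \<kappa> \<mu> \<alpha> v0 \<le> gamma_kappa \<kappa> \<mu> \<alpha> v)) \<longleftrightarrow>
      (v0 \<ge> 0 \<and> (\<forall>v\<ge>0. HH v0 \<le> HH v))" for v0
    using g by auto
  obtain v0 where v0: "v0 \<ge> 0" "\<forall>v\<ge>0. HH v0 \<le> HH v"
    using min_exists[of \<kappa> DD aA bA vs, OF kl ku DD0 aA0 bA0 vs] by blast
  show ?thesis unfolding eqv
  proof (rule ex1I[of _ v0])
    show "v0 \<ge> 0 \<and> (\<forall>v\<ge>0. HH v0 \<le> HH v)" using v0 by blast
    fix w assume w: "w \<ge> 0 \<and> (\<forall>v\<ge>0. HH w \<le> HH v)"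
    have "HH v0 \<le> HH vs" using v0 vs by simp
    then have fin: "HH v0 \<noteq> \<infinity>" using vs(2) by (metis ereal_infty_less_eq(1))
    have w1: "w \<ge> 0" and w2: "\<forall>v\<ge>0. HH w \<le> HH v" using w by auto
    have "v0 = w"
      by (rule min_unique[of \<kappa> DD aA bA v0 w, OF kl ku DD0 aA0 bA0 v0(1) w1 v0(2) w2 fin])
    then show "w = v0" by simp
  qed
qed

lemma case2_pos:
  assumes c2: "((\<alpha> > 0 \<and> measure \<mu> {0<..} > 0) \<or> (\<alpha> < 0 \<and> measure \<mu> {..<0} > 0))"
  shows "\<exists>v>0. HH v < HH 0"
proof -
  obtain v1 where v1: "v1 > 0" "HH v1 \<noteq> \<infinity>" using case2_fin[OF c2] by blast
  show ?thesis
  proof (cases "HH 0 = \<infinity>")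
    case True
    then show ?thesis using v1 by (auto simp: top.not_eq_extremum)
  next
    case False
    have K0: "K \<kappa> 0 = ereal (cc \<kappa>)" by (rule K_zero[OF kl ku])
    obtain a0' where a0': "saff DD aA bA 0 = ereal a0'"
      using False A_nm[of 0] K0 by (cases "saff DD aA bA 0") auto
    obtain a1 where a1: "saff DD aA bA v1 = ereal a1"
      using v1(2) A_nm[of v1] K_nm[of v1] by (cases "saff DD aA bA v1") auto
    define B where "B = (a1 - a0') / v1"
    obtain v where v: "0 < v" "v \<le> v1" "K \<kappa> v < ereal (cc \<kappa> - B * v)"
      using K_rd[OF kl ku v1(1), of B] by blast
    define t where "t = v / v1"
    have t: "0 \<le> t" "t \<le> 1" using v v1 by (auto simp: t_def)
    have "v = (1 - t) * 0 + t * v1" using v1 by (simp add: t_def)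
    then have "saff DD aA bA v \<le> ereal (1 - t) * saff DD aA bA 0 + ereal t * saff DD aA bA v1"
      using saff_convex[OF t, of DD aA bA 0 v1] by simp
    also have "\<dots> = ereal (a0' + t * (a1 - a0'))" using a0' a1 by (simp add: algebra_simps)
    finally have Av: "saff DD aA bA v \<le> ereal (a0' + t * (a1 - a0'))" .
    obtain av where av: "saff DD aA bA v = ereal av" using Av A_nm[of v] by (cases "saff DD aA bA v") auto
    obtain kv where kv: "K \<kappa> v = ereal kv" using v(3) K_nm[of v] by (cases "K \<kappa> v") auto
    have "t * (a1 - a0') = B * v" using v1 by (simp add: t_def B_def)
    then have "av + kv < a0' + cc \<kappa>" using Av av v(3) kv by simp
    then have "HH v < HH 0" using av kv a0' K0 by simp
    then show ?thesis using v by blast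
  qed
qed

end


context
  fixes \<kappa> \<alpha> :: real and \<mu> :: "real measure"
  assumes kl: "8/3 < \<kappa>" and ku: "\<kappa> < 8"
    and P: "prob_space \<mu>" and S: "sets \<mu> = sets borel"
begin

abbreviation HH2 where "HH2 v \<equiv> H \<kappa> {l. Lambda_mu \<mu> l \<noteq> \<infinity>} (\<lambda>l. l * \<alpha>) (\<lambda>l. real_of_ereal (Lambda_mu \<mu> l)) v"

lemma case3_AE:
  assumes c3: "(\<alpha> > 0 \<and> measure \<mu> {0<..} = 0) \<or> (\<alpha> < 0 \<and> measure \<mu> {..<0} = 0)"
    and l: "l * \<alpha> \<ge> 0"
  shows "AE x in \<mu>. l * x \<le> 0"
proof -
  interpret prob_space \<mu> by (rule P)
  show ?thesis
  proof (cases "\<alpha> > 0")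
    case True
    then have m: "measure \<mu> {0<..} = 0" using c3 by auto
    have "{0<..} \<in> sets \<mu>" using S by simp
    moreover have "emeasure \<mu> ({0<..} :: real set) = 0" using m emeasure_eq_measure[of "{0<..}"] by simp
    ultimately have "{0<..} \<in> null_sets \<mu>" by (simp add: null_sets_def)
    from AE_not_in[OF this] have "AE x in \<mu>. x \<le> 0" by (simp add: not_less)
    moreover have "l \<ge> 0" using l True by (simp add: zero_le_mult_iff)
    ultimately show ?thesis by (auto elim!: eventually_mono intro: mult_nonneg_nonpos)
  next
    case False
    then have a: "\<alpha> < 0" and m: "measure \<mu> {..<0} = 0" using c3 by auto
    have "{..<0} \<in> sets \<mu>" using S by simp
    moreover have "emeasure \<mu> ({..<0} :: real set) = 0" using m emeasure_eq_measure[of "{..<0}"] by simp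
    ultimately have "{..<0} \<in> null_sets \<mu>" by (simp add: null_sets_def)
    from AE_not_in[OF this] have "AE x in \<mu>. x \<ge> 0" by (simp add: not_less)
    moreover have "l \<le> 0" using l a by (simp add: zero_le_mult_iff)
    ultimately show ?thesis by (auto elim!: eventually_mono intro: mult_nonpos_nonneg)
  qed
qed

lemma case3_gp:
  assumes c3: "(\<alpha> > 0 \<and> measure \<mu> {0<..} = 0) \<or> (\<alpha> < 0 \<and> measure \<mu> {..<0} = 0)"
    and v: "v > 0"
  shows "gamma_pos \<kappa> \<mu> \<alpha> v = \<infinity>"
proof -
  have an: "\<alpha> \<noteq> 0" using c3 by auto
  have "legendre (Lambda_mu \<mu>) (\<alpha> / v) = \<infinity>"
    unfolding legendre_def
  proof (rule SUP_PInfty)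
    fix n :: nat
    define l where "l = real n * v / \<alpha>"
    have la: "l * \<alpha> = real n * v" using an by (simp add: l_def)
    then have "l * \<alpha> \<ge> 0" using v by simp
    from Lm_le0[OF P case3_AE[OF c3 this]] obtain r where
      r: "Lambda_mu \<mu> l = ereal r" "r \<le> 0"
      using Lm_not_minf[of \<mu> l] by (cases "Lambda_mu \<mu> l") auto
    have "l * (\<alpha> / v) = real n" using la v by (simp add: field_simps)
    then have "ereal (real n) \<le> ereal (l * (\<alpha> / v)) - Lambda_mu \<mu> l" using r by simp
    then show "\<exists>l\<in>UNIV. ereal (real n) \<le> ereal (l * (\<alpha> / v)) - Lambda_mu \<mu> l" by blast
  qed
  moreover have "legendre (Lambda_kappa \<kappa>) (1 / v) \<ge> - ereal (lk \<kappa> 0)"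
  proof -
    have "ereal (0 * (1/v)) - Lambda_kappa \<kappa> 0 \<le> legendre (Lambda_kappa \<kappa>) (1 / v)"
      unfolding legendre_def by (rule SUP_upper) simp
    moreover have "Lambda_kappa \<kappa> 0 = ereal (lk \<kappa> 0)" using Lk_eq[OF kl ku] cc_pos[OF kl ku] by simp
    ultimately show ?thesis by (simp add: zero_ereal_def)
  qed
  then have "ereal v * legendre (Lambda_kappa \<kappa>) (1 / v) \<noteq> -\<infinity>"
    using v by (cases "legendre (Lambda_kappa \<kappa>) (1 / v)") auto
  ultimately show ?thesis using v by (simp add: gamma_pos_def)
qed

lemma case3:
  assumes c3: "(\<alpha> > 0 \<and> measure \<mu> {0<..} = 0) \<or> (\<alpha> < 0 \<and> measure \<mu> {..<0} = 0)"
    and v: "v \<ge> 0"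
  shows "gamma_kappa \<kappa> \<mu> \<alpha> v = \<infinity>"
proof (cases "v > 0")
  case True
  then show ?thesis using case3_gp[OF c3 True] by (simp add: gamma_kappa_def)
next
  case False
  then have v0: "v = 0" using v by simp
  have an: "\<alpha> \<noteq> 0" using c3 by auto
  have "eventually (\<lambda>w. gamma_pos \<kappa> \<mu> \<alpha> w = \<infinity>) (at_right 0)"
    unfolding eventually_at_right_field using case3_gp[OF c3] by (intro exI[of _ 1]) auto
  then have "(gamma_pos \<kappa> \<mu> \<alpha> \<longlongrightarrow> \<infinity>) (at_right 0)" by (rule tendsto_eventually)
  then have "Lim (at_right 0) (gamma_pos \<kappa> \<mu> \<alpha>) = \<infinity>" by (intro tendsto_Lim) simp_all
  then show ?thesis using v0 an by (simp add: gamma_kappa_def)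
qed

lemma main_all:
  shows "(\<alpha> = 0 \<longrightarrow>
           (\<exists>!\<nu>0. \<nu>0 \<ge> 0 \<and> (\<forall>\<nu>\<ge>0. gamma_kappa \<kappa> \<mu> \<alpha> \<nu>0 \<le> gamma_kappa \<kappa> \<mu> \<alpha> \<nu>)))
       \<and> (((\<alpha> > 0 \<and> measure \<mu> {0<..} > 0) \<or> (\<alpha> < 0 \<and> measure \<mu> {..<0} > 0)) \<longrightarrow>
           (\<exists>!\<nu>0. \<nu>0 \<ge> 0 \<and> (\<forall>\<nu>\<ge>0. gamma_kappa \<kappa> \<mu> \<alpha> \<nu>0 \<le> gamma_kappa \<kappa> \<mu> \<alpha> \<nu>))
           \<and> (\<forall>\<nu>0. \<nu>0 \<ge> 0 \<and> (\<forall>\<nu>\<ge>0. gamma_kappa \<kappa> \<mu> \<alpha> \<nu>0 \<le> gamma_kappa \<kappa> \<mu> \<alpha> \<nu>) \<longrightarrow> \<nu>0 > 0))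
       \<and> (((\<alpha> > 0 \<and> measure \<mu> {0<..} = 0) \<or> (\<alpha> < 0 \<and> measure \<mu> {..<0} = 0)) \<longrightarrow>
           (\<forall>\<nu>\<ge>0. gamma_kappa \<kappa> \<mu> \<alpha> \<nu> = \<infinity>))"
proof (intro conjI impI allI)
  assume a: "\<alpha> = 0"
  have "HH2 0 \<noteq> \<infinity>" using H0_alpha0[OF kl ku P S a] by simp
  from uniq_min[OF kl ku P S g_eq_H_alpha0[OF kl ku P S a] order_refl this]
  show "\<exists>!\<nu>0. \<nu>0 \<ge> 0 \<and> (\<forall>\<nu>\<ge>0. gamma_kappa \<kappa> \<mu> \<alpha> \<nu>0 \<le> gamma_kappa \<kappa> \<mu> \<alpha> \<nu>)" .
next
  assume c: "(\<alpha> > 0 \<and> measure \<mu> {0<..} > 0) \<or> (\<alpha> < 0 \<and> measure \<mu> {..<0} > 0)"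
  note c2 = c
  obtain v1 where v1: "v1 > 0" "HH2 v1 \<noteq> \<infinity>" using case2_fin[OF kl ku P S c2] by blast
  from uniq_min[OF kl ku P S g_eq_H_case2[OF kl ku P S c2] less_imp_le[OF v1(1)] v1(2)]
  show "\<exists>!\<nu>0. \<nu>0 \<ge> 0 \<and> (\<forall>\<nu>\<ge>0. gamma_kappa \<kappa> \<mu> \<alpha> \<nu>0 \<le> gamma_kappa \<kappa> \<mu> \<alpha> \<nu>)" .
  fix v0 assume v0: "v0 \<ge> 0 \<and> (\<forall>\<nu>\<ge>0. gamma_kappa \<kappa> \<mu> \<alpha> v0 \<le> gamma_kappa \<kappa> \<mu> \<alpha> \<nu>)"
  show "v0 > 0"
  proof (rule ccontr)
    assume "\<not> v0 > 0"
    then have z: "v0 = 0" using v0 by simp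
    obtain v where v: "v > 0" "HH2 v < HH2 0" using case2_pos[OF kl ku P S c2] by blast
    have "gamma_kappa \<kappa> \<mu> \<alpha> 0 \<le> gamma_kappa \<kappa> \<mu> \<alpha> v" using v0 z v by simp
    then have "HH2 0 \<le> HH2 v"
      using g_eq_H_case2[OF kl ku P S c2, of 0] g_eq_H_case2[OF kl ku P S c2, of v] v by simp
    then show False using v by simp
  qed
next
  fix v :: real
  assume c3: "(\<alpha> > 0 \<and> measure \<mu> {0<..} = 0) \<or> (\<alpha> < 0 \<and> measure \<mu> {..<0} = 0)" and v: "v \<ge> 0"
  show "gamma_kappa \<kappa> \<mu> \<alpha> v = \<infinity>" by (rule case3[OF c3 v])
qed

end

theorem theorem5p2:
  fixes \<kappa> \<alpha> :: real and \<mu> :: "real measure"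
  assumes "8/3 < \<kappa>" "\<kappa> < 8"
    and "prob_space \<mu>" "sets \<mu> = sets borel"
  shows "(\<alpha> = 0 \<longrightarrow>
           (\<exists>!\<nu>0. \<nu>0 \<ge> 0 \<and> (\<forall>\<nu>\<ge>0. gamma_kappa \<kappa> \<mu> \<alpha> \<nu>0 \<le> gamma_kappa \<kappa> \<mu> \<alpha> \<nu>)))
       \<and> (((\<alpha> > 0 \<and> measure \<mu> {0<..} > 0) \<or> (\<alpha> < 0 \<and> measure \<mu> {..<0} > 0)) \<longrightarrow>
           (\<exists>!\<nu>0. \<nu>0 \<ge> 0 \<and> (\<forall>\<nu>\<ge>0. gamma_kappa \<kappa> \<mu> \<alpha> \<nu>0 \<le> gamma_kappa \<kappa> \<mu> \<alpha> \<nu>))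
           \<and> (\<forall>\<nu>0. \<nu>0 \<ge> 0 \<and> (\<forall>\<nu>\<ge>0. gamma_kappa \<kappa> \<mu> \<alpha> \<nu>0 \<le> gamma_kappa \<kappa> \<mu> \<alpha> \<nu>) \<longrightarrow> \<nu>0 > 0))
       \<and> (((\<alpha> > 0 \<and> measure \<mu> {0<..} = 0) \<or> (\<alpha> < 0 \<and> measure \<mu> {..<0} = 0)) \<longrightarrow>
           (\<forall>\<nu>\<ge>0. gamma_kappa \<kappa> \<mu> \<alpha> \<nu> = \<infinity>))"
  by (rule main_all[OF assms])


end
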